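(* Let $\mathcal V$ be a descent category, $T$ a finite simplicial set, $S\subset T$ a simplicial subset, and $f:X\to Y$ a hypercover of simplicial spaces. Then the induced morphism $\mathrm{Map}(T,X)\to\mathrm{Map}(S\hookrightarrow T,f)$ is a cover.
   Context: A descent category is a small category $\mathcal V$ with a subcategory of morphisms called covers such that: $\mathcal V$ has finite limits; pullbacks of covers are covers; if $f$ and $g\circ f$ are covers then $g$ is a cover. A simplicial space is a simplicial object in $\mathcal V$. A finite simplicial set has finitely many nondegenerate simplices; $\mathrm{Map}(T,X)$ is the finite limit representing simplicial maps $T\to X$; $\mathrm{Map}(S\hookrightarrow T,f)=\mathrm{Map}(S,X)\times_{\mathrm{Map}(S,Y)}\mathrm{Map}(T,Y)$. A morphism $f:X\to Y$ is a hypercover if $X_n\to\mathrm{Map}(\partial\Delta^n\hookrightarrow\Delta^n,f)$ is a cover for all $n\ge0$. *)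

theory Defs
  imports Main
begin

record ('o,'m) cat =
  Obj  :: "'o set"
  Arr  :: "'m set"
  Dom  :: "'m \<Rightarrow> 'o"
  Cod  :: "'m \<Rightarrow> 'o"
  Comp :: "'m \<Rightarrow> 'm \<Rightarrow> 'm"   (* Comp C g f = g o f *)
  Idm  :: "'o \<Rightarrow> 'm"

definition hom :: "('o,'m) cat \<Rightarrow> 'o \<Rightarrow> 'o \<Rightarrow> 'm set" where
  "hom C a b = {f \<in> Arr C. Dom C f = a \<and> Cod C f = b}"

definition is_category :: "('o,'m) cat \<Rightarrow> bool" where
  "is_category C \<longleftrightarrow>
     (\<forall>f\<in>Arr C. Dom C f \<in> Obj C \<and> Cod C f \<in> Obj C) \<and>
     (\<forall>a\<in>Obj C. Idm C a \<in> hom C a a) \<and>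
     (\<forall>f\<in>Arr C. \<forall>g\<in>Arr C. Cod C f = Dom C g \<longrightarrow> Comp C g f \<in> hom C (Dom C f) (Cod C g)) \<and>
     (\<forall>f\<in>Arr C. Comp C f (Idm C (Dom C f)) = f \<and> Comp C (Idm C (Cod C f)) f = f) \<and>
     (\<forall>f\<in>Arr C. \<forall>g\<in>Arr C. \<forall>h\<in>Arr C. Cod C f = Dom C g \<longrightarrow> Cod C g = Dom C h \<longrightarrow>
        Comp C h (Comp C g f) = Comp C (Comp C h g) f)"

definition is_pullback :: "('o,'m) cat \<Rightarrow> 'm \<Rightarrow> 'm \<Rightarrow> 'o \<Rightarrow> 'm \<Rightarrow> 'm \<Rightarrow> bool" where
  "is_pullback C a b P p1 p2 \<longleftrightarrow>
     a \<in> Arr C \<and> b \<in> Arr C \<and> Cod C a = Cod C b \<and> P \<in> Obj C \<and>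
     p1 \<in> hom C P (Dom C a) \<and> p2 \<in> hom C P (Dom C b) \<and> Comp C a p1 = Comp C b p2 \<and>
     (\<forall>Q q1 q2. Q \<in> Obj C \<and> q1 \<in> hom C Q (Dom C a) \<and> q2 \<in> hom C Q (Dom C b) \<and>
        Comp C a q1 = Comp C b q2 \<longrightarrow>
        (\<exists>!u. u \<in> hom C Q P \<and> Comp C p1 u = q1 \<and> Comp C p2 u = q2))"

definition is_terminal :: "('o,'m) cat \<Rightarrow> 'o \<Rightarrow> bool" where
  "is_terminal C t \<longleftrightarrow> t \<in> Obj C \<and> (\<forall>a\<in>Obj C. \<exists>!u. u \<in> hom C a t)"

text \<open>Finite limits: equivalently, a terminal object and all pullbacks.\<close>
definition has_finite_limits :: "('o,'m) cat \<Rightarrow> bool" where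
  "has_finite_limits C \<longleftrightarrow> (\<exists>t. is_terminal C t) \<and>
     (\<forall>a b. a \<in> Arr C \<and> b \<in> Arr C \<and> Cod C a = Cod C b \<longrightarrow> (\<exists>P p1 p2. is_pullback C a b P p1 p2))"

definition descent_category :: "('o,'m) cat \<Rightarrow> 'm set \<Rightarrow> bool" where
  "descent_category C cov \<longleftrightarrow>
     is_category C \<and> has_finite_limits C \<and>
     cov \<subseteq> Arr C \<and>
     (\<forall>a\<in>Obj C. Idm C a \<in> cov) \<and>
     (\<forall>f\<in>cov. \<forall>g\<in>cov. Cod C f = Dom C g \<longrightarrow> Comp C g f \<in> cov) \<and>
     (\<forall>a b P p1 p2. is_pullback C a b P p1 p2 \<and> b \<in> cov \<longrightarrow> p1 \<in> cov) \<and>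
     (\<forall>f g. f \<in> cov \<and> g \<in> Arr C \<and> Cod C f = Dom C g \<and> Comp C g f \<in> cov \<longrightarrow> g \<in> cov)"

text \<open>Monotone maps [m] -> [n], [m] = {0..m}, represented extensionally (value 0 outside [m]).\<close>
definition dmor :: "nat \<Rightarrow> nat \<Rightarrow> (nat \<Rightarrow> nat) set" where
  "dmor m n = {\<theta>. (\<forall>i\<le>m. \<theta> i \<le> n) \<and> (\<forall>i j. i \<le> j \<longrightarrow> j \<le> m \<longrightarrow> \<theta> i \<le> \<theta> j) \<and>
                  (\<forall>i. m < i \<longrightarrow> \<theta> i = 0)}"

definition dcomp :: "nat \<Rightarrow> (nat \<Rightarrow> nat) \<Rightarrow> (nat \<Rightarrow> nat) \<Rightarrow> (nat \<Rightarrow> nat)" where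
  "dcomp k \<theta> \<phi> = (\<lambda>i. if i \<le> k then \<theta> (\<phi> i) else 0)"

definition did :: "nat \<Rightarrow> (nat \<Rightarrow> nat)" where
  "did n = (\<lambda>i. if i \<le> n then i else 0)"

text \<open>Act T m n theta : T_n -> T_m for theta : [m] -> [n].\<close>
record 'a sset =
  Simp :: "nat \<Rightarrow> 'a set"
  Act  :: "nat \<Rightarrow> nat \<Rightarrow> (nat \<Rightarrow> nat) \<Rightarrow> 'a \<Rightarrow> 'a"

definition is_sset :: "'a sset \<Rightarrow> bool" where
  "is_sset T \<longleftrightarrow>
     (\<forall>m n \<theta> x. \<theta> \<in> dmor m n \<longrightarrow> x \<in> Simp T n \<longrightarrow> Act T m n \<theta> x \<in> Simp T m) \<and>
     (\<forall>n x. x \<in> Simp T n \<longrightarrow> Act T n n (did n) x = x) \<and>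
     (\<forall>k m n \<phi> \<theta> x. \<phi> \<in> dmor k m \<longrightarrow> \<theta> \<in> dmor m n \<longrightarrow> x \<in> Simp T n \<longrightarrow>
        Act T k m \<phi> (Act T m n \<theta> x) = Act T k n (dcomp k \<theta> \<phi>) x)"

definition degenerate :: "'a sset \<Rightarrow> nat \<Rightarrow> 'a \<Rightarrow> bool" where
  "degenerate T n x \<longleftrightarrow> (\<exists>m<n. \<exists>\<theta>\<in>dmor n m. \<exists>y\<in>Simp T m. x = Act T n m \<theta> y)"

definition finite_sset :: "'a sset \<Rightarrow> bool" where
  "finite_sset T \<longleftrightarrow> is_sset T \<and> finite {(n, x). x \<in> Simp T n \<and> \<not> degenerate T n x}"

definition is_subsset :: "'a sset \<Rightarrow> 'a sset \<Rightarrow> bool" where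
  "is_subsset S T \<longleftrightarrow> is_sset S \<and> is_sset T \<and> (\<forall>n. Simp S n \<subseteq> Simp T n) \<and>
     (\<forall>m n \<theta> x. \<theta> \<in> dmor m n \<longrightarrow> x \<in> Simp S n \<longrightarrow> Act S m n \<theta> x = Act T m n \<theta> x)"

definition simplex :: "nat \<Rightarrow> (nat \<Rightarrow> nat) sset" where
  "simplex n = \<lparr>Simp = (\<lambda>m. dmor m n), Act = (\<lambda>k m \<phi> \<theta>. dcomp k \<theta> \<phi>)\<rparr>"

definition bdry :: "nat \<Rightarrow> (nat \<Rightarrow> nat) sset" where
  "bdry n = \<lparr>Simp = (\<lambda>m. {\<theta> \<in> dmor m n. \<not> ({..n} \<subseteq> \<theta> ` {..m})}),
             Act = (\<lambda>k m \<phi> \<theta>. dcomp k \<theta> \<phi>)\<rparr>"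

text \<open>SMor X m n theta : X_n -> X_m for theta : [m] -> [n].\<close>
record ('o,'m) sobj =
  SOb  :: "nat \<Rightarrow> 'o"
  SMor :: "nat \<Rightarrow> nat \<Rightarrow> (nat \<Rightarrow> nat) \<Rightarrow> 'm"

definition is_sobj :: "('o,'m) cat \<Rightarrow> ('o,'m) sobj \<Rightarrow> bool" where
  "is_sobj C X \<longleftrightarrow>
     (\<forall>n. SOb X n \<in> Obj C) \<and>
     (\<forall>m n \<theta>. \<theta> \<in> dmor m n \<longrightarrow> SMor X m n \<theta> \<in> hom C (SOb X n) (SOb X m)) \<and>
     (\<forall>n. SMor X n n (did n) = Idm C (SOb X n)) \<and>
     (\<forall>k m n \<phi> \<theta>. \<phi> \<in> dmor k m \<longrightarrow> \<theta> \<in> dmor m n \<longrightarrow>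
        Comp C (SMor X k m \<phi>) (SMor X m n \<theta>) = SMor X k n (dcomp k \<theta> \<phi>))"

definition is_smap :: "('o,'m) cat \<Rightarrow> ('o,'m) sobj \<Rightarrow> ('o,'m) sobj \<Rightarrow> (nat \<Rightarrow> 'm) \<Rightarrow> bool" where
  "is_smap C X Y f \<longleftrightarrow> is_sobj C X \<and> is_sobj C Y \<and>
     (\<forall>n. f n \<in> hom C (SOb X n) (SOb Y n)) \<and>
     (\<forall>m n \<theta>. \<theta> \<in> dmor m n \<longrightarrow> Comp C (f m) (SMor X m n \<theta>) = Comp C (SMor Y m n \<theta>) (f n))"

definition is_cone :: "('o,'m) cat \<Rightarrow> 'a sset \<Rightarrow> ('o,'m) sobj \<Rightarrow> 'o \<Rightarrow> (nat \<Rightarrow> 'a \<Rightarrow> 'm) \<Rightarrow> bool" where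
  "is_cone C T X L c \<longleftrightarrow> L \<in> Obj C \<and>
     (\<forall>n. \<forall>x\<in>Simp T n. c n x \<in> hom C L (SOb X n)) \<and>
     (\<forall>m n \<theta> x. \<theta> \<in> dmor m n \<longrightarrow> x \<in> Simp T n \<longrightarrow>
        Comp C (SMor X m n \<theta>) (c n x) = c m (Act T m n \<theta> x))"

text \<open>(L,c) is Map(T,X): the limit representing simplicial maps T -> X.\<close>
definition is_Map :: "('o,'m) cat \<Rightarrow> 'a sset \<Rightarrow> ('o,'m) sobj \<Rightarrow> 'o \<Rightarrow> (nat \<Rightarrow> 'a \<Rightarrow> 'm) \<Rightarrow> bool" where
  "is_Map C T X L c \<longleftrightarrow> is_cone C T X L c \<and>
     (\<forall>L' c'. is_cone C T X L' c' \<longrightarrow>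
        (\<exists>!u. u \<in> hom C L' L \<and> (\<forall>n. \<forall>x\<in>Simp T n. Comp C (c n x) u = c' n x)))"

text \<open>P = Map(S -> T, f) = Map(S,X) x_{Map(S,Y)} Map(T,Y) (for some choice of the
  limits and of the pullback), and v : K -> P is the morphism induced by the cone (K,k)
  over T in X (in particular, by Map(T,X) itself).\<close>
definition is_relmatch ::
  "('o,'m) cat \<Rightarrow> 'a sset \<Rightarrow> 'a sset \<Rightarrow> ('o,'m) sobj \<Rightarrow> ('o,'m) sobj \<Rightarrow> (nat \<Rightarrow> 'm) \<Rightarrow>
   'o \<Rightarrow> (nat \<Rightarrow> 'a \<Rightarrow> 'm) \<Rightarrow> 'o \<Rightarrow> 'm \<Rightarrow> bool" where
  "is_relmatch C S T X Y f K k P v \<longleftrightarrow>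
     (\<exists>MSX cSX MSY cSY MTY cTY a b p1 p2.
        is_Map C S X MSX cSX \<and> is_Map C S Y MSY cSY \<and> is_Map C T Y MTY cTY \<and>
        a \<in> hom C MSX MSY \<and> (\<forall>n. \<forall>x\<in>Simp S n. Comp C (cSY n x) a = Comp C (f n) (cSX n x)) \<and>
        b \<in> hom C MTY MSY \<and> (\<forall>n. \<forall>x\<in>Simp S n. Comp C (cSY n x) b = cTY n x) \<and>
        is_pullback C a b P p1 p2 \<and>
        v \<in> hom C K P \<and>
        (\<forall>n. \<forall>x\<in>Simp S n. Comp C (cSX n x) (Comp C p1 v) = k n x) \<and>
        (\<forall>n. \<forall>x\<in>Simp T n. Comp C (cTY n x) (Comp C p2 v) = Comp C (f n) (k n x)))"

text \<open>Hypercover: X_n -> Map(boundary(n) -> Delta^n, f) is a cover for all n, where X_n is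
  Map(Delta^n, X) via the Yoneda cone (theta |-> X(theta)).\<close>
definition hypercover :: "('o,'m) cat \<Rightarrow> 'm set \<Rightarrow> ('o,'m) sobj \<Rightarrow> ('o,'m) sobj \<Rightarrow> (nat \<Rightarrow> 'm) \<Rightarrow> bool" where
  "hypercover C cov X Y f \<longleftrightarrow> is_smap C X Y f \<and>
     (\<forall>n P v. is_relmatch C (bdry n) (simplex n) X Y f (SOb X n) (\<lambda>m \<theta>. SMor X m n \<theta>) P v
        \<longrightarrow> v \<in> cov)"

end

theory Submission
  imports Defs
begin

definition surjd :: "nat \<Rightarrow> nat \<Rightarrow> (nat \<Rightarrow> nat) \<Rightarrow> bool" where
  "surjd m n \<theta> \<longleftrightarrow> {..n} \<subseteq> \<theta> ` {..m}"

lemma dmorI: "(\<And>i. i \<le> m \<Longrightarrow> \<theta> i \<le> n) \<Longrightarrow> (\<And>i j. i \<le> j \<Longrightarrow> j \<le> m \<Longrightarrow> \<theta> i \<le> \<theta> j)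
   \<Longrightarrow> (\<And>i. m < i \<Longrightarrow> \<theta> i = 0) \<Longrightarrow> \<theta> \<in> dmor m n"
  by (auto simp: dmor_def)

lemma dmorD: assumes "\<theta> \<in> dmor m n"
  shows "i \<le> m \<Longrightarrow> \<theta> i \<le> n" "i \<le> j \<Longrightarrow> j \<le> m \<Longrightarrow> \<theta> i \<le> \<theta> j" "m < i \<Longrightarrow> \<theta> i = 0"
  using assms by (auto simp: dmor_def)

lemma dcomp_dmor: "\<phi> \<in> dmor k m \<Longrightarrow> \<theta> \<in> dmor m n \<Longrightarrow> dcomp k \<theta> \<phi> \<in> dmor k n"
  unfolding dmor_def dcomp_def by auto

lemma did_dmor: "did n \<in> dmor n n"
  unfolding dmor_def did_def by auto

lemma dcomp_did_right: "\<theta> \<in> dmor m n \<Longrightarrow> dcomp m \<theta> (did m) = \<theta>"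
  unfolding dmor_def dcomp_def did_def by (auto simp: fun_eq_iff)

lemma dcomp_did_left: "\<theta> \<in> dmor m n \<Longrightarrow> dcomp m (did n) \<theta> = \<theta>"
  unfolding dmor_def dcomp_def did_def by (auto simp: fun_eq_iff)

lemma dcomp_assoc: "\<psi> \<in> dmor j k \<Longrightarrow> \<phi> \<in> dmor k m \<Longrightarrow>
   dcomp j \<theta> (dcomp j \<phi> \<psi>) = dcomp j (dcomp k \<theta> \<phi>) \<psi>"
  unfolding dmor_def dcomp_def by (auto simp: fun_eq_iff)

lemma surjd_dcomp: "\<phi> \<in> dmor k m \<Longrightarrow> surjd k m \<phi> \<Longrightarrow> surjd m n \<theta> \<Longrightarrow> surjd k n (dcomp k \<theta> \<phi>)"
  unfolding surjd_def dcomp_def by (force simp: image_iff subset_iff)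

lemma surjd_dcomp_left: "\<phi> \<in> dmor k m \<Longrightarrow> surjd k n (dcomp k \<theta> \<phi>) \<Longrightarrow> surjd m n \<theta>"
  unfolding surjd_def dcomp_def dmor_def by (force simp: image_iff subset_iff)

lemma surj_section:
  assumes s: "\<sigma> \<in> dmor m n" "surjd m n \<sigma>" and i: "i \<le> m"
  shows "\<exists>\<delta>\<in>dmor n m. dcomp n \<sigma> \<delta> = did n \<and> \<delta> (\<sigma> i) = i"
proof -
  define \<delta> where "\<delta> = (\<lambda>j. if j \<le> n then (if j = \<sigma> i then i else (SOME p. p \<le> m \<and> \<sigma> p = j)) else 0)"
  have pre: "\<delta> j \<le> m \<and> \<sigma> (\<delta> j) = j" if "j \<le> n" for j
  proof (cases "j = \<sigma> i")
    case True then show ?thesis using i that by (simp add: \<delta>_def)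
  next
    case False
    have "\<exists>p. p \<le> m \<and> \<sigma> p = j" using s(2) that unfolding surjd_def by force
    then have "(SOME p. p \<le> m \<and> \<sigma> p = j) \<le> m \<and> \<sigma> (SOME p. p \<le> m \<and> \<sigma> p = j) = j"
      by (rule someI_ex)
    then show ?thesis using False that by (simp add: \<delta>_def)
  qed
  have mono: "\<delta> a \<le> \<delta> b" if "a \<le> b" "b \<le> n" for a b
  proof (rule ccontr)
    assume "\<not> \<delta> a \<le> \<delta> b"
    then have "\<delta> b \<le> \<delta> a" by simp
    then have "\<sigma> (\<delta> b) \<le> \<sigma> (\<delta> a)" using dmorD(2)[OF s(1), of "\<delta> b" "\<delta> a"] pre[of a] that by auto
    then have "b \<le> a" using pre[of a] pre[of b] that by simp
    then have "a = b" using that by simp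
    then show False using \<open>\<not> \<delta> a \<le> \<delta> b\<close> by simp
  qed
  have "\<delta> \<in> dmor n m"
    by (rule dmorI) (use pre mono in \<open>auto simp: \<delta>_def\<close>)
  moreover have "dcomp n \<sigma> \<delta> = did n"
    using pre by (auto simp: dcomp_def did_def fun_eq_iff)
  moreover have "\<delta> (\<sigma> i) = i" using dmorD(1)[OF s(1) i] by (simp add: \<delta>_def)
  ultimately show ?thesis by blast
qed

lemma surj_endo_id:
  assumes t: "\<tau> \<in> dmor n n" and s: "surjd n n \<tau>"
  shows "\<tau> = did n"
proof -
  have "\<tau> ` {..n} = {..n}" using s dmorD(1)[OF t] unfolding surjd_def by auto
  then have inj: "inj_on \<tau> {..n}" by (simp add: eq_card_imp_inj_on)
  have lt: "\<tau> a < \<tau> b" if "a < b" "b \<le> n" for a b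
    using dmorD(2)[OF t, of a b] inj that by (metis le_less less_imp_le_nat inj_on_def atMost_iff order.trans less_irrefl)
  have ge: "i \<le> \<tau> i" if "i \<le> n" for i
    using that proof (induction i)
    case (Suc i) then show ?case using lt[of i "Suc i"] by simp
  qed simp
  have le: "\<tau> (n - d) \<le> n - d" if "d \<le> n" for d
    using that proof (induction d)
    case 0 then show ?case using dmorD(1)[OF t, of n] by simp
  next
    case (Suc d)
    then have "\<tau> (n - Suc d) < \<tau> (n - d)" using lt[of "n - Suc d" "n - d"] by simp
    then show ?case using Suc by simp
  qed
  have "\<tau> i = i" if "i \<le> n" for i using ge[OF that] le[of "n - i"] that by simp
  then show ?thesis using dmorD(3)[OF t] by (auto simp: did_def fun_eq_iff)
qed

lemma coface_factor:
  assumes t: "\<tau> \<in> dmor m n" and j: "j \<le> n" "j \<notin> \<tau> ` {..m}"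
  shows "0 < n \<and> (\<exists>\<tau>'\<in>dmor m (n - 1). \<exists>d\<in>dmor (n - 1) n. \<tau> = dcomp m d \<tau>')"
proof -
  have "n \<noteq> 0"
  proof
    assume "n = 0"
    then have "\<tau> 0 = 0" using dmorD(1)[OF t, of 0] by simp
    then show False using j \<open>n = 0\<close> by force
  qed
  define d where "d = (\<lambda>i. if i \<le> n - 1 then (if i < j then i else i + 1) else 0)"
  define \<tau>' where "\<tau>' = (\<lambda>i. if i \<le> m then (if \<tau> i < j then \<tau> i else \<tau> i - 1) else 0)"
  have ne: "\<tau> i \<noteq> j" if "i \<le> m" for i using j that by auto
  have "d \<in> dmor (n - 1) n" by (rule dmorI) (use \<open>n \<noteq> 0\<close> j in \<open>auto simp: d_def\<close>)
  moreover have "\<tau>' \<in> dmor m (n - 1)"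
  proof (rule dmorI)
    fix i assume "i \<le> m" then show "\<tau>' i \<le> n - 1"
      using dmorD(1)[OF t, of i] ne[of i] j by (auto simp: \<tau>'_def)
  next
    fix a b assume "a \<le> b" "b \<le> m" then show "\<tau>' a \<le> \<tau>' b"
      using dmorD(2)[OF t, of a b] ne[of a] ne[of b] by (auto simp: \<tau>'_def)
  qed (simp add: \<tau>'_def)
  moreover have "\<tau> = dcomp m d \<tau>'"
  proof
    fix i show "\<tau> i = dcomp m d \<tau>' i"
    proof (cases "i \<le> m")
      case True
      then show ?thesis using ne[of i] dmorD(1)[OF t, of i] j
        by (auto simp: dcomp_def d_def \<tau>'_def)
    next
      case False then show ?thesis using dmorD(3)[OF t] by (simp add: dcomp_def)
    qed
  qed
  ultimately show ?thesis using \<open>n \<noteq> 0\<close> by blast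
qed

lemma coface_factor': "\<tau> \<in> dmor m n \<Longrightarrow> \<not> surjd m n \<tau> \<Longrightarrow>
   0 < n \<and> (\<exists>\<tau>'\<in>dmor m (n - 1). \<exists>d\<in>dmor (n - 1) n. \<tau> = dcomp m d \<tau>')"
  unfolding surjd_def using coface_factor by blast



lemma sset_act: "is_sset T \<Longrightarrow> \<theta> \<in> dmor m n \<Longrightarrow> x \<in> Simp T n \<Longrightarrow> Act T m n \<theta> x \<in> Simp T m"
  unfolding is_sset_def by blast
lemma sset_id: "is_sset T \<Longrightarrow> x \<in> Simp T n \<Longrightarrow> Act T n n (did n) x = x"
  unfolding is_sset_def by blast
lemma sset_comp: "is_sset T \<Longrightarrow> \<phi> \<in> dmor k m \<Longrightarrow> \<theta> \<in> dmor m n \<Longrightarrow> x \<in> Simp T n \<Longrightarrow>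
        Act T k m \<phi> (Act T m n \<theta> x) = Act T k n (dcomp k \<theta> \<phi>) x"
  unfolding is_sset_def by blast

lemma subsset_sub: "is_subsset S T \<Longrightarrow> x \<in> Simp S n \<Longrightarrow> x \<in> Simp T n"
  unfolding is_subsset_def by blast
lemma subsset_act: "is_subsset S T \<Longrightarrow> \<theta> \<in> dmor m n \<Longrightarrow> x \<in> Simp S n \<Longrightarrow> Act S m n \<theta> x = Act T m n \<theta> x"
  unfolding is_subsset_def by blast
lemma subsset_closed: "is_subsset S T \<Longrightarrow> \<theta> \<in> dmor m n \<Longrightarrow> x \<in> Simp S n \<Longrightarrow> Act T m n \<theta> x \<in> Simp S m"
  unfolding is_subsset_def is_sset_def by metis
lemma subsset_sset: "is_subsset S T \<Longrightarrow> is_sset S" "is_subsset S T \<Longrightarrow> is_sset T"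
  unfolding is_subsset_def by auto

lemma nondeg_fix_surj:
  assumes T: "is_sset T" and x: "x \<in> Simp T n" "\<not> degenerate T n x"
    and t: "\<tau> \<in> dmor n n" "Act T n n \<tau> x = x"
  shows "surjd n n \<tau>"
proof (rule ccontr)
  assume "\<not> surjd n n \<tau>"
  from coface_factor'[OF t(1) this] obtain \<tau>' d where
    n: "0 < n" and \<tau>': "\<tau>' \<in> dmor n (n - 1)" and d: "d \<in> dmor (n - 1) n" and e: "\<tau> = dcomp n d \<tau>'"
    by blast
  have "x = Act T n (n - 1) \<tau>' (Act T (n - 1) n d x)"
    using t(2) e sset_comp[OF T \<tau>' d x(1)] by simp
  moreover have "Act T (n - 1) n d x \<in> Simp T (n - 1)" using sset_act[OF T d x(1)] .
  ultimately have "degenerate T n x" unfolding degenerate_def using n \<tau>' by (intro exI[of _ "n - 1"]) auto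
  then show False using x(2) by simp
qed

lemma EZ:
  assumes T: "is_sset T" and x: "x \<in> Simp T n" "\<not> degenerate T n x"
    and s: "\<sigma> \<in> dmor m n" "surjd m n \<sigma>" and r: "\<rho> \<in> dmor m n"
    and e: "Act T m n \<sigma> x = Act T m n \<rho> x"
  shows "\<sigma> = \<rho>"
proof
  fix i show "\<sigma> i = \<rho> i"
  proof (cases "i \<le> m")
    case True
    from surj_section[OF s True] obtain \<delta> where \<delta>: "\<delta> \<in> dmor n m" "dcomp n \<sigma> \<delta> = did n" "\<delta> (\<sigma> i) = i"
      by blast
    have "x = Act T n n (dcomp n \<sigma> \<delta>) x" using \<delta>(2) sset_id[OF T x(1)] by simp
    also have "\<dots> = Act T n m \<delta> (Act T m n \<sigma> x)" using sset_comp[OF T \<delta>(1) s(1) x(1)] by simp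
    also have "\<dots> = Act T n n (dcomp n \<rho> \<delta>) x" using e sset_comp[OF T \<delta>(1) r x(1)] by simp
    finally have fx: "Act T n n (dcomp n \<rho> \<delta>) x = x" by simp
    have rd: "dcomp n \<rho> \<delta> \<in> dmor n n" using dcomp_dmor[OF \<delta>(1) r] .
    have "dcomp n \<rho> \<delta> = did n"
      using surj_endo_id[OF rd nondeg_fix_surj[OF T x rd fx]] .
    then have "dcomp n \<rho> \<delta> (\<sigma> i) = did n (\<sigma> i)" by simp
    then show ?thesis using \<delta>(3) dmorD(1)[OF s(1) True] by (simp add: dcomp_def did_def)
  next
    case False then show ?thesis using dmorD(3)[OF s(1)] dmorD(3)[OF r] by simp
  qed
qed

lemma surj_not_in_sub:
  assumes S: "is_subsset S T" and x: "x \<in> Simp T n" "x \<notin> Simp S n"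
    and s: "\<sigma> \<in> dmor m n" "surjd m n \<sigma>"
  shows "Act T m n \<sigma> x \<notin> Simp S m"
proof
  assume a: "Act T m n \<sigma> x \<in> Simp S m"
  from surj_section[OF s, of 0] obtain \<delta> where \<delta>: "\<delta> \<in> dmor n m" "dcomp n \<sigma> \<delta> = did n" by auto
  have T: "is_sset T" using subsset_sset[OF S] by simp
  have "Act T n m \<delta> (Act T m n \<sigma> x) \<in> Simp S n" using subsset_closed[OF S \<delta>(1) a] .
  also have "Act T n m \<delta> (Act T m n \<sigma> x) = x"
    using sset_comp[OF T \<delta>(1) s(1) x(1)] \<delta>(2) sset_id[OF T x(1)] by simp
  finally show False using x(2) by simp
qed

definition cell :: "'a sset \<Rightarrow> 'a sset \<Rightarrow> nat \<Rightarrow> 'a \<Rightarrow> 'a sset" where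
  "cell T S n x = \<lparr>Simp = (\<lambda>m. Simp S m \<union> (\<lambda>\<theta>. Act T m n \<theta> x) ` dmor m n), Act = Act T\<rparr>"

definition good_cell :: "'a sset \<Rightarrow> 'a sset \<Rightarrow> nat \<Rightarrow> 'a \<Rightarrow> bool" where
  "good_cell T S n x \<longleftrightarrow> is_subsset S T \<and> x \<in> Simp T n \<and> \<not> degenerate T n x \<and> x \<notin> Simp S n \<and>
     (\<forall>m \<theta>. \<theta> \<in> dmor m n \<longrightarrow> \<not> surjd m n \<theta> \<longrightarrow> Act T m n \<theta> x \<in> Simp S m)"

lemma cell_simps: "Simp (cell T S n x) m = Simp S m \<union> (\<lambda>\<theta>. Act T m n \<theta> x) ` dmor m n"
  "Act (cell T S n x) = Act T"
  by (simp_all add: cell_def)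

lemma cell_sset:
  assumes S: "is_subsset S T" and x: "x \<in> Simp T n"
  shows "is_subsset (cell T S n x) T"
proof -
  have T: "is_sset T" using subsset_sset[OF S] by simp
  have sub: "Simp (cell T S n x) m \<subseteq> Simp T m" for m
    using subsset_sub[OF S] sset_act[OF T _ x] by (auto simp: cell_simps)
  have cl: "Act T k m \<phi> y \<in> Simp (cell T S n x) k" if "\<phi> \<in> dmor k m" "y \<in> Simp (cell T S n x) m" for k m \<phi> y
  proof -
    from that(2) consider "y \<in> Simp S m" | \<theta> where "\<theta> \<in> dmor m n" "y = Act T m n \<theta> x"
      by (auto simp: cell_simps)
    then show ?thesis
    proof cases
      case 1 then show ?thesis using subsset_closed[OF S that(1)] by (simp add: cell_simps)
    next
      case 2 then show ?thesis using sset_comp[OF T that(1) 2(1) x] dcomp_dmor[OF that(1) 2(1)]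
        by (auto simp: cell_simps)
    qed
  qed
  have "is_sset (cell T S n x)"
    unfolding is_sset_def using cl sub sset_id[OF T] sset_comp[OF T] sset_act[OF T]
    by (auto simp: cell_simps(2) simp del: cell_simps(1) dest: subsetD[OF sub]) 
  then show ?thesis unfolding is_subsset_def using T sub by (simp add: cell_simps)
qed

lemma cell_sub:
  assumes S: "is_subsset S T" and x: "x \<in> Simp T n"
  shows "is_subsset S (cell T S n x)"
  using cell_sset[OF assms] S unfolding is_subsset_def by (auto simp: cell_simps)

lemma cell_x: "is_sset T \<Longrightarrow> x \<in> Simp T n \<Longrightarrow> x \<in> Simp (cell T S n x) n"
  using sset_id[of T x n] did_dmor[of n] by (force simp: cell_simps)

lemma cell_char:
  assumes "good_cell T S n x" "y \<in> Simp (cell T S n x) m" "y \<notin> Simp S m"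
  shows "\<exists>\<sigma>\<in>dmor m n. surjd m n \<sigma> \<and> y = Act T m n \<sigma> x"
  using assms unfolding good_cell_def by (auto simp: cell_simps)

definition ND :: "'a sset \<Rightarrow> 'a sset \<Rightarrow> (nat \<times> 'a) set" where
  "ND T S = {(n, x). x \<in> Simp T n \<and> \<not> degenerate T n x \<and> x \<notin> Simp S n}"

lemma below_in:
  assumes S: "is_subsset S T" and h: "\<forall>k<N. \<forall>y\<in>Simp T k. \<not> degenerate T k y \<longrightarrow> y \<in> Simp S k"
  shows "k < N \<Longrightarrow> y \<in> Simp T k \<Longrightarrow> y \<in> Simp S k"
proof (induction k arbitrary: y rule: less_induct)
  case (less k)
  show ?case
  proof (cases "degenerate T k y")
    case True
    then obtain m \<theta> z where "m < k" "\<theta> \<in> dmor k m" "z \<in> Simp T m" "y = Act T k m \<theta> z"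
      unfolding degenerate_def by blast
    then show ?thesis using less(1)[of m z] less(2) subsset_closed[OF S] by auto
  next
    case False then show ?thesis using h less by blast
  qed
qed

lemma ND_empty: "is_subsset S T \<Longrightarrow> ND T S = {} \<Longrightarrow> y \<in> Simp T k \<Longrightarrow> y \<in> Simp S k"
  using below_in[of S T "Suc k" k y] unfolding ND_def by auto

lemma min_cell:
  assumes S: "is_subsset S T" and ne: "ND T S \<noteq> {}"
  shows "\<exists>n x. (n, x) \<in> ND T S \<and> good_cell T S n x \<and> ND T (cell T S n x) \<subseteq> ND T S - {(n, x)}"
proof -
  have T: "is_sset T" using subsset_sset[OF S] by simp
  have "\<exists>n. \<exists>x. (n, x) \<in> ND T S" using ne by auto
  then obtain n where nn: "\<exists>x. (n, x) \<in> ND T S" and least: "\<And>k. k < n \<Longrightarrow> \<not> (\<exists>x. (k, x) \<in> ND T S)"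
    using exists_least_iff[of "\<lambda>n. \<exists>x. (n, x) \<in> ND T S"] by blast
  then obtain x where nx: "(n, x) \<in> ND T S" by blast
  have below: "k < n \<Longrightarrow> y \<in> Simp T k \<Longrightarrow> y \<in> Simp S k" for k y
    using below_in[OF S, of n k y] least unfolding ND_def by blast
  have bd: "Act T m n \<theta> x \<in> Simp S m" if "\<theta> \<in> dmor m n" "\<not> surjd m n \<theta>" for m \<theta>
  proof -
    from coface_factor'[OF that] obtain \<tau>' d where
      n: "0 < n" and \<tau>': "\<tau>' \<in> dmor m (n - 1)" and d: "d \<in> dmor (n - 1) n" and e: "\<theta> = dcomp m d \<tau>'"
      by blast
    have x: "x \<in> Simp T n" using nx unfolding ND_def by simp
    have "Act T (n - 1) n d x \<in> Simp S (n - 1)" using below[OF _ sset_act[OF T d x]] n by simp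
    from subsset_closed[OF S \<tau>' this] show ?thesis using sset_comp[OF T \<tau>' d x] e by simp
  qed
  have gc: "good_cell T S n x" using nx bd S unfolding good_cell_def ND_def by auto
  have "ND T (cell T S n x) \<subseteq> ND T S - {(n, x)}"
    using cell_x[OF T, of x n S] nx unfolding ND_def by (auto simp: cell_simps)
  then show ?thesis using nx gc by blast
qed



definition is_relcone where
  "is_relcone C S T X Y f L c d \<longleftrightarrow> is_cone C S X L c \<and> is_cone C T Y L d \<and>
     (\<forall>n. \<forall>x\<in>Simp S n. Comp C (f n) (c n x) = d n x)"

definition is_relMap where
  "is_relMap C S T X Y f P \<alpha> \<beta> \<longleftrightarrow> is_relcone C S T X Y f P \<alpha> \<beta> \<and>
     (\<forall>L c d. is_relcone C S T X Y f L c d \<longrightarrow>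
        (\<exists>!u. u \<in> hom C L P \<and> (\<forall>n. \<forall>x\<in>Simp S n. Comp C (\<alpha> n x) u = c n x) \<and>
                              (\<forall>n. \<forall>x\<in>Simp T n. Comp C (\<beta> n x) u = d n x)))"

locale dcat =
  fixes C :: "('o,'m) cat" and cov :: "'m set"
  assumes dc: "descent_category C cov"
begin

lemma cat: "is_category C" using dc unfolding descent_category_def by simp

lemma hom_obj: "f \<in> hom C a b \<Longrightarrow> a \<in> Obj C \<and> b \<in> Obj C"
  using cat unfolding is_category_def hom_def by blast

lemma comp_hom: "f \<in> hom C a b \<Longrightarrow> g \<in> hom C b c \<Longrightarrow> Comp C g f \<in> hom C a c"
  using cat unfolding is_category_def hom_def by auto

lemma assoc: "f \<in> hom C a b \<Longrightarrow> g \<in> hom C b c \<Longrightarrow> h \<in> hom C c d \<Longrightarrow>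
   Comp C h (Comp C g f) = Comp C (Comp C h g) f"
  using cat unfolding is_category_def hom_def by auto

lemma id_hom: "a \<in> Obj C \<Longrightarrow> Idm C a \<in> hom C a a"
  using cat unfolding is_category_def by auto

lemma id_r: "f \<in> hom C a b \<Longrightarrow> Comp C f (Idm C a) = f"
  using cat unfolding is_category_def hom_def by auto
lemma id_l: "f \<in> hom C a b \<Longrightarrow> Comp C (Idm C b) f = f"
  using cat unfolding is_category_def hom_def by auto

lemma cov_comp: "f \<in> cov \<Longrightarrow> g \<in> cov \<Longrightarrow> f \<in> hom C a b \<Longrightarrow> g \<in> hom C b c \<Longrightarrow> Comp C g f \<in> cov"
proof -
  assume a: "f \<in> cov" "g \<in> cov" "f \<in> hom C a b" "g \<in> hom C b c"
  have "\<forall>f\<in>cov. \<forall>g\<in>cov. Cod C f = Dom C g \<longrightarrow> Comp C g f \<in> cov"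
    using dc unfolding descent_category_def by blast
  then show ?thesis using a unfolding hom_def by simp
qed

lemma cov_pb: "is_pullback C a b P p1 p2 \<Longrightarrow> b \<in> cov \<Longrightarrow> p1 \<in> cov"
proof -
  have "\<forall>a b P p1 p2. is_pullback C a b P p1 p2 \<and> b \<in> cov \<longrightarrow> p1 \<in> cov"
    using dc unfolding descent_category_def by blast
  then show "is_pullback C a b P p1 p2 \<Longrightarrow> b \<in> cov \<Longrightarrow> p1 \<in> cov" by blast
qed

lemma fl: "has_finite_limits C" using dc unfolding descent_category_def by simp

lemma has_pb: "a \<in> hom C A Z \<Longrightarrow> b \<in> hom C B Z \<Longrightarrow> \<exists>P p1 p2. is_pullback C a b P p1 p2"
proof -
  have "\<forall>a b. a \<in> Arr C \<and> b \<in> Arr C \<and> Cod C a = Cod C b \<longrightarrow> (\<exists>P p1 p2. is_pullback C a b P p1 p2)"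
    using fl unfolding has_finite_limits_def by (rule conjunct2)
  moreover assume "a \<in> hom C A Z" "b \<in> hom C B Z"
  ultimately show "\<exists>P p1 p2. is_pullback C a b P p1 p2"
    unfolding hom_def by simp
qed

lemma has_term: "\<exists>t. is_terminal C t"
  using fl unfolding has_finite_limits_def by (rule conjunct1)

lemma pbD:
  assumes pb: "is_pullback C a b P p1 p2" and a: "a \<in> hom C A Z" and b: "b \<in> hom C B Z"
  shows "P \<in> Obj C" "p1 \<in> hom C P A" "p2 \<in> hom C P B" "Comp C a p1 = Comp C b p2"
    "\<And>Q q1 q2. q1 \<in> hom C Q A \<Longrightarrow> q2 \<in> hom C Q B \<Longrightarrow> Comp C a q1 = Comp C b q2 \<Longrightarrow>
        \<exists>!u. u \<in> hom C Q P \<and> Comp C p1 u = q1 \<and> Comp C p2 u = q2"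
proof -
  have da: "Dom C a = A" and db: "Dom C b = B" using a b unfolding hom_def by auto
  note u = pb[unfolded is_pullback_def da db]
  show "P \<in> Obj C" using u by simp
  show "p1 \<in> hom C P A" using u by simp
  show "p2 \<in> hom C P B" using u by simp
  show "Comp C a p1 = Comp C b p2" using u by simp
  have U: "\<forall>Q q1 q2. Q \<in> Obj C \<and> q1 \<in> hom C Q A \<and> q2 \<in> hom C Q B \<and>
        Comp C a q1 = Comp C b q2 \<longrightarrow> (\<exists>!u. u \<in> hom C Q P \<and> Comp C p1 u = q1 \<and> Comp C p2 u = q2)"
    using u by simp
  fix Q q1 q2 assume q: "q1 \<in> hom C Q A" "q2 \<in> hom C Q B" "Comp C a q1 = Comp C b q2"
  have "Q \<in> Obj C" using hom_obj[OF q(1)] by simp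
  then show "\<exists>!u. u \<in> hom C Q P \<and> Comp C p1 u = q1 \<and> Comp C p2 u = q2"
    using U q by simp
qed

lemma pbI:
  assumes a: "a \<in> hom C A Z" and b: "b \<in> hom C B Z" and p: "p1 \<in> hom C P A" "p2 \<in> hom C P B"
    "Comp C a p1 = Comp C b p2"
    and U: "\<And>Q q1 q2. q1 \<in> hom C Q A \<Longrightarrow> q2 \<in> hom C Q B \<Longrightarrow> Comp C a q1 = Comp C b q2 \<Longrightarrow>
        \<exists>!u. u \<in> hom C Q P \<and> Comp C p1 u = q1 \<and> Comp C p2 u = q2"
  shows "is_pullback C a b P p1 p2"
proof -
  have da: "Dom C a = A" "a \<in> Arr C" "Cod C a = Z" and db: "Dom C b = B" "b \<in> Arr C" "Cod C b = Z"
    using a b unfolding hom_def by auto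
  have "P \<in> Obj C" using hom_obj[OF p(1)] by simp
  moreover have "\<forall>Q q1 q2. Q \<in> Obj C \<and> q1 \<in> hom C Q A \<and> q2 \<in> hom C Q B \<and>
        Comp C a q1 = Comp C b q2 \<longrightarrow> (\<exists>!u. u \<in> hom C Q P \<and> Comp C p1 u = q1 \<and> Comp C p2 u = q2)"
    using U by simp
  ultimately show ?thesis unfolding is_pullback_def da db using p da(2) db(2) by simp
qed

lemma sobj_hom: "is_sobj C X \<Longrightarrow> \<theta> \<in> dmor m n \<Longrightarrow> SMor X m n \<theta> \<in> hom C (SOb X n) (SOb X m)"
  unfolding is_sobj_def by blast
lemma sobj_comp: "is_sobj C X \<Longrightarrow> \<phi> \<in> dmor k m \<Longrightarrow> \<theta> \<in> dmor m n \<Longrightarrow>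
   Comp C (SMor X k m \<phi>) (SMor X m n \<theta>) = SMor X k n (dcomp k \<theta> \<phi>)"
  unfolding is_sobj_def by blast
lemma sobj_id: "is_sobj C X \<Longrightarrow> SMor X n n (did n) = Idm C (SOb X n)"
  unfolding is_sobj_def by blast
lemma sobj_obj: "is_sobj C X \<Longrightarrow> SOb X n \<in> Obj C"
  unfolding is_sobj_def by blast

lemma smap_hom: "is_smap C X Y f \<Longrightarrow> f n \<in> hom C (SOb X n) (SOb Y n)"
  unfolding is_smap_def by blast
lemma smap_nat: "is_smap C X Y f \<Longrightarrow> \<theta> \<in> dmor m n \<Longrightarrow> Comp C (f m) (SMor X m n \<theta>) = Comp C (SMor Y m n \<theta>) (f n)"
  unfolding is_smap_def by blast
lemma smap_sobj: "is_smap C X Y f \<Longrightarrow> is_sobj C X" "is_smap C X Y f \<Longrightarrow> is_sobj C Y"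
  unfolding is_smap_def by auto

lemma cone_hom: "is_cone C T X L c \<Longrightarrow> x \<in> Simp T n \<Longrightarrow> c n x \<in> hom C L (SOb X n)"
  unfolding is_cone_def by blast
lemma cone_nat: "is_cone C T X L c \<Longrightarrow> \<theta> \<in> dmor m n \<Longrightarrow> x \<in> Simp T n \<Longrightarrow>
   Comp C (SMor X m n \<theta>) (c n x) = c m (Act T m n \<theta> x)"
  unfolding is_cone_def by blast
lemma cone_obj: "is_cone C T X L c \<Longrightarrow> L \<in> Obj C"
  unfolding is_cone_def by blast

lemma ex1_eq: "\<exists>!x. P x \<Longrightarrow> P a \<Longrightarrow> P b \<Longrightarrow> a = b" by blast

lemma cone_restrict: assumes S: "is_subsset S T" and c: "is_cone C T X L c" shows "is_cone C S X L c"
  unfolding is_cone_def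
proof (intro conjI allI impI ballI)
  show "L \<in> Obj C" using c unfolding is_cone_def by simp
  fix n x assume "x \<in> Simp S n" then show "c n x \<in> hom C L (SOb X n)"
    using c subsset_sub[OF S] unfolding is_cone_def by blast
next
  fix m n \<theta> x assume "\<theta> \<in> dmor m n" "x \<in> Simp S n"
  then show "Comp C (SMor X m n \<theta>) (c n x) = c m (Act S m n \<theta> x)"
    using c subsset_sub[OF S] subsset_act[OF S] unfolding is_cone_def by simp
qed

lemma cone_cong: assumes c: "is_cone C T X L c" and T: "is_sset T" and e: "\<And>n x. x \<in> Simp T n \<Longrightarrow> c' n x = c n x"
  shows "is_cone C T X L c'"
  unfolding is_cone_def
proof (intro conjI allI impI ballI)
  show "L \<in> Obj C" using c unfolding is_cone_def by simp
  fix n x assume "x \<in> Simp T n" then show "c' n x \<in> hom C L (SOb X n)"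
    using c e unfolding is_cone_def by simp
next
  fix m n \<theta> x assume "\<theta> \<in> dmor m n" "x \<in> Simp T n"
  then show "Comp C (SMor X m n \<theta>) (c' n x) = c' m (Act T m n \<theta> x)"
    using c e sset_act[OF T] unfolding is_cone_def by simp
qed

lemma cone_pre:
  assumes X: "is_sobj C X" and c: "is_cone C T X L c" and u: "u \<in> hom C L' L"
  shows "is_cone C T X L' (\<lambda>n x. Comp C (c n x) u)"
  unfolding is_cone_def
proof (intro conjI allI impI ballI)
  show "L' \<in> Obj C" using hom_obj[OF u] by simp
  fix n x assume "x \<in> Simp T n" then show "Comp C (c n x) u \<in> hom C L' (SOb X n)"
    using comp_hom[OF u cone_hom[OF c]] by simp
next
  fix m n \<theta> x assume "\<theta> \<in> dmor m n" "x \<in> Simp T n"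
  then show "Comp C (SMor X m n \<theta>) (Comp C (c n x) u) = Comp C (c m (Act T m n \<theta> x)) u"
    using assoc[OF u cone_hom[OF c] sobj_hom[OF X]] cone_nat[OF c] by simp
qed

lemma cone_post:
  assumes f: "is_smap C X Y f" and c: "is_cone C T X L c"
  shows "is_cone C T Y L (\<lambda>n x. Comp C (f n) (c n x))"
  unfolding is_cone_def
proof (intro conjI allI impI ballI)
  show "L \<in> Obj C" using cone_obj[OF c] .
  fix n x assume "x \<in> Simp T n" then show "Comp C (f n) (c n x) \<in> hom C L (SOb Y n)"
    using comp_hom[OF cone_hom[OF c] smap_hom[OF f]] by simp
next
  fix m n \<theta> x assume t: "\<theta> \<in> dmor m n" "x \<in> Simp T n"
  have "Comp C (SMor Y m n \<theta>) (Comp C (f n) (c n x)) = Comp C (Comp C (SMor Y m n \<theta>) (f n)) (c n x)"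
    using assoc[OF cone_hom[OF c t(2)] smap_hom[OF f] sobj_hom[OF smap_sobj(2)[OF f] t(1)]] .
  also have "\<dots> = Comp C (Comp C (f m) (SMor X m n \<theta>)) (c n x)" using smap_nat[OF f t(1)] by simp
  also have "\<dots> = Comp C (f m) (Comp C (SMor X m n \<theta>) (c n x))"
    using assoc[OF cone_hom[OF c t(2)] sobj_hom[OF smap_sobj(1)[OF f] t(1)] smap_hom[OF f]] by simp
  finally show "Comp C (SMor Y m n \<theta>) (Comp C (f n) (c n x)) = Comp C (f m) (c m (Act T m n \<theta> x))"
    using cone_nat[OF c t] by simp
qed

lemma Map_cone: "is_Map C T X M c \<Longrightarrow> is_cone C T X M c"
  unfolding is_Map_def by simp

lemma Map_univ:
  assumes "is_Map C T X M c" "is_cone C T X L d"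
  obtains u where "u \<in> hom C L M" "\<And>n x. x \<in> Simp T n \<Longrightarrow> Comp C (c n x) u = d n x"
proof -
  have "\<exists>!u. u \<in> hom C L M \<and> (\<forall>n. \<forall>x\<in>Simp T n. Comp C (c n x) u = d n x)"
    using assms unfolding is_Map_def by simp
  then obtain u where "u \<in> hom C L M \<and> (\<forall>n. \<forall>x\<in>Simp T n. Comp C (c n x) u = d n x)"
    by (rule ex1E) simp
  then show ?thesis by (elim conjE) (rule that, auto)
qed

lemma Map_uniq:
  assumes M: "is_Map C T X M c" and X: "is_sobj C X" and u: "u \<in> hom C L M" and u': "u' \<in> hom C L M"
    and e: "\<And>n x. x \<in> Simp T n \<Longrightarrow> Comp C (c n x) u = Comp C (c n x) u'"
  shows "u = u'"
proof -
  have "is_cone C T X L (\<lambda>n x. Comp C (c n x) u)" using cone_pre[OF X Map_cone[OF M] u] .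
  then have "\<exists>!w. w \<in> hom C L M \<and> (\<forall>n. \<forall>x\<in>Simp T n. Comp C (c n x) w = Comp C (c n x) u)"
    using M unfolding is_Map_def by simp
  from ex1_eq[OF this] show ?thesis using u u' e by simp
qed

lemma relcone_cone: "is_relcone C S T X Y f L c d \<Longrightarrow> is_cone C S X L c"
  "is_relcone C S T X Y f L c d \<Longrightarrow> is_cone C T Y L d"
  "is_relcone C S T X Y f L c d \<Longrightarrow> x \<in> Simp S n \<Longrightarrow> Comp C (f n) (c n x) = d n x"
  unfolding is_relcone_def by auto

lemma relMap_relcone: "is_relMap C S T X Y f P \<alpha> \<beta> \<Longrightarrow> is_relcone C S T X Y f P \<alpha> \<beta>"
  unfolding is_relMap_def by simp

lemma relMap_univ:
  assumes "is_relMap C S T X Y f P \<alpha> \<beta>" "is_relcone C S T X Y f L c d"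
  obtains u where "u \<in> hom C L P" "\<And>n x. x \<in> Simp S n \<Longrightarrow> Comp C (\<alpha> n x) u = c n x"
     "\<And>n x. x \<in> Simp T n \<Longrightarrow> Comp C (\<beta> n x) u = d n x"
proof -
  have "\<exists>!u. u \<in> hom C L P \<and> (\<forall>n. \<forall>x\<in>Simp S n. Comp C (\<alpha> n x) u = c n x) \<and>
                              (\<forall>n. \<forall>x\<in>Simp T n. Comp C (\<beta> n x) u = d n x)"
    using assms unfolding is_relMap_def by simp
  then obtain u where "u \<in> hom C L P \<and> (\<forall>n. \<forall>x\<in>Simp S n. Comp C (\<alpha> n x) u = c n x) \<and>
                              (\<forall>n. \<forall>x\<in>Simp T n. Comp C (\<beta> n x) u = d n x)"
    by (rule ex1E) simp
  then show ?thesis by (elim conjE) (rule that, auto)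
qed

lemma relMap_uniq:
  assumes R: "is_relMap C S T X Y f P \<alpha> \<beta>" and f: "is_smap C X Y f"
    and u: "u \<in> hom C L P" and u': "u' \<in> hom C L P"
    and e1: "\<And>n x. x \<in> Simp S n \<Longrightarrow> Comp C (\<alpha> n x) u = Comp C (\<alpha> n x) u'"
    and e2: "\<And>n x. x \<in> Simp T n \<Longrightarrow> Comp C (\<beta> n x) u = Comp C (\<beta> n x) u'"
  shows "u = u'"
proof -
  have rc: "is_relcone C S T X Y f P \<alpha> \<beta>" using relMap_relcone[OF R] .
  have c1: "is_cone C S X L (\<lambda>n x. Comp C (\<alpha> n x) u)"
    using cone_pre[OF smap_sobj(1)[OF f] relcone_cone(1)[OF rc] u] .
  have c2: "is_cone C T Y L (\<lambda>n x. Comp C (\<beta> n x) u)"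
    using cone_pre[OF smap_sobj(2)[OF f] relcone_cone(2)[OF rc] u] .
  have c3: "Comp C (f n) (Comp C (\<alpha> n x) u) = Comp C (\<beta> n x) u" if "x \<in> Simp S n" for n x
    using assoc[OF u cone_hom[OF relcone_cone(1)[OF rc] that] smap_hom[OF f]] relcone_cone(3)[OF rc that]
    by simp
  have "is_relcone C S T X Y f L (\<lambda>n x. Comp C (\<alpha> n x) u) (\<lambda>n x. Comp C (\<beta> n x) u)"
    unfolding is_relcone_def using c1 c2 c3 by simp
  then have "\<exists>!w. w \<in> hom C L P \<and> (\<forall>n. \<forall>x\<in>Simp S n. Comp C (\<alpha> n x) w = Comp C (\<alpha> n x) u) \<and>
                              (\<forall>n. \<forall>x\<in>Simp T n. Comp C (\<beta> n x) w = Comp C (\<beta> n x) u)"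
    using R unfolding is_relMap_def by simp
  then have "u' = u"
  proof (rule ex1_eq)
    show "u' \<in> hom C L P \<and> (\<forall>n. \<forall>x\<in>Simp S n. Comp C (\<alpha> n x) u' = Comp C (\<alpha> n x) u) \<and>
                              (\<forall>n. \<forall>x\<in>Simp T n. Comp C (\<beta> n x) u' = Comp C (\<beta> n x) u)"
      using u' e1 e2 by simp
  qed (use u in simp)
  then show ?thesis by simp
qed

end


context dcat begin

lemma relpb:
  assumes f: "is_smap C X Y f" and ST: "is_subsset S T"
    and MSX: "is_Map C S X MSX cSX" and MSY: "is_Map C S Y MSY cSY" and MTY: "is_Map C T Y MTY cTY"
    and a: "a \<in> hom C MSX MSY" and ea: "\<And>n x. x \<in> Simp S n \<Longrightarrow> Comp C (cSY n x) a = Comp C (f n) (cSX n x)"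
    and b: "b \<in> hom C MTY MSY" and eb: "\<And>n x. x \<in> Simp S n \<Longrightarrow> Comp C (cSY n x) b = cTY n x"
    and pb: "is_pullback C a b P p1 p2"
  shows "is_relMap C S T X Y f P (\<lambda>n x. Comp C (cSX n x) p1) (\<lambda>n x. Comp C (cTY n x) p2)"
proof -
  have X: "is_sobj C X" and Y: "is_sobj C Y" using smap_sobj[OF f] by auto
  note cSX = Map_cone[OF MSX] and cSY = Map_cone[OF MSY] and cTY = Map_cone[OF MTY]
  have p1: "p1 \<in> hom C P MSX" and p2: "p2 \<in> hom C P MTY" and ab: "Comp C a p1 = Comp C b p2"
    using pbD[OF pb a b] by auto
  have rel: "Comp C (f n) (Comp C (cSX n x) p1) = Comp C (cTY n x) p2" if x: "x \<in> Simp S n" for n x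
  proof -
    have "Comp C (f n) (Comp C (cSX n x) p1) = Comp C (Comp C (f n) (cSX n x)) p1"
      using assoc[OF p1 cone_hom[OF cSX x] smap_hom[OF f]] .
    also have "\<dots> = Comp C (Comp C (cSY n x) a) p1" using ea[OF x] by simp
    also have "\<dots> = Comp C (cSY n x) (Comp C a p1)" using assoc[OF p1 a cone_hom[OF cSY x]] by simp
    also have "\<dots> = Comp C (cSY n x) (Comp C b p2)" using ab by simp
    also have "\<dots> = Comp C (Comp C (cSY n x) b) p2" using assoc[OF p2 b cone_hom[OF cSY x]] .
    finally show ?thesis using eb[OF x] by simp
  qed
  have rc: "is_relcone C S T X Y f P (\<lambda>n x. Comp C (cSX n x) p1) (\<lambda>n x. Comp C (cTY n x) p2)"
    unfolding is_relcone_def using cone_pre[OF X cSX p1] cone_pre[OF Y cTY p2] rel by simp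
  show ?thesis unfolding is_relMap_def
  proof (intro conjI rc allI impI)
    fix L c d assume r: "is_relcone C S T X Y f L c d"
    obtain u1 where u1: "u1 \<in> hom C L MSX" "\<And>n x. x \<in> Simp S n \<Longrightarrow> Comp C (cSX n x) u1 = c n x"
      using Map_univ[OF MSX relcone_cone(1)[OF r]] by blast
    obtain u2 where u2: "u2 \<in> hom C L MTY" "\<And>n x. x \<in> Simp T n \<Longrightarrow> Comp C (cTY n x) u2 = d n x"
      using Map_univ[OF MTY relcone_cone(2)[OF r]] by blast
    have "Comp C a u1 = Comp C b u2"
    proof (rule Map_uniq[OF MSY Y comp_hom[OF u1(1) a] comp_hom[OF u2(1) b]])
      fix n x assume x: "x \<in> Simp S n"
      have "Comp C (cSY n x) (Comp C a u1) = Comp C (Comp C (cSY n x) a) u1"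
        using assoc[OF u1(1) a cone_hom[OF cSY x]] .
      also have "\<dots> = Comp C (Comp C (f n) (cSX n x)) u1" using ea[OF x] by simp
      also have "\<dots> = Comp C (f n) (Comp C (cSX n x) u1)"
        using assoc[OF u1(1) cone_hom[OF cSX x] smap_hom[OF f]] by simp
      also have "\<dots> = d n x" using u1(2)[OF x] relcone_cone(3)[OF r x] by simp
      also have "\<dots> = Comp C (cTY n x) u2" using u2(2)[OF subsset_sub[OF ST x]] by simp
      also have "\<dots> = Comp C (Comp C (cSY n x) b) u2" using eb[OF x] by simp
      also have "\<dots> = Comp C (cSY n x) (Comp C b u2)" using assoc[OF u2(1) b cone_hom[OF cSY x]] by simp
      finally show "Comp C (cSY n x) (Comp C a u1) = Comp C (cSY n x) (Comp C b u2)" .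
    qed
    from pbD(5)[OF pb a b u1(1) u2(1) this]
    have U: "\<exists>!u. u \<in> hom C L P \<and> Comp C p1 u = u1 \<and> Comp C p2 u = u2" .
    then obtain u where u: "u \<in> hom C L P" "Comp C p1 u = u1" "Comp C p2 u = u2" by blast
    show "\<exists>!u. u \<in> hom C L P \<and> (\<forall>n. \<forall>x\<in>Simp S n. Comp C (Comp C (cSX n x) p1) u = c n x) \<and>
                              (\<forall>n. \<forall>x\<in>Simp T n. Comp C (Comp C (cTY n x) p2) u = d n x)"
    proof (rule ex1I[of _ u], intro conjI allI ballI)
      show "u \<in> hom C L P" using u(1) .
      fix n x assume x: "x \<in> Simp S n"
      show "Comp C (Comp C (cSX n x) p1) u = c n x"
        using assoc[OF u(1) p1 cone_hom[OF cSX x]] u(2) u1(2)[OF x] by simp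
    next
      fix n x assume x: "x \<in> Simp T n"
      show "Comp C (Comp C (cTY n x) p2) u = d n x"
        using assoc[OF u(1) p2 cone_hom[OF cTY x]] u(3) u2(2)[OF x] by simp
    next
      fix w assume w: "w \<in> hom C L P \<and> (\<forall>n. \<forall>x\<in>Simp S n. Comp C (Comp C (cSX n x) p1) w = c n x) \<and>
                              (\<forall>n. \<forall>x\<in>Simp T n. Comp C (Comp C (cTY n x) p2) w = d n x)"
      have w1: "Comp C p1 w = u1"
      proof (rule Map_uniq[OF MSX X comp_hom[OF _ p1] u1(1)])
        show "w \<in> hom C L P" using w by simp
        fix n x assume x: "x \<in> Simp S n"
        show "Comp C (cSX n x) (Comp C p1 w) = Comp C (cSX n x) u1"
          using assoc[of w L P, OF _ p1 cone_hom[OF cSX x]] w u1(2)[OF x] x by simp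
      qed
      have w2: "Comp C p2 w = u2"
      proof (rule Map_uniq[OF MTY Y comp_hom[OF _ p2] u2(1)])
        show "w \<in> hom C L P" using w by simp
        fix n x assume x: "x \<in> Simp T n"
        show "Comp C (cTY n x) (Comp C p2 w) = Comp C (cTY n x) u2"
          using assoc[of w L P, OF _ p2 cone_hom[OF cTY x]] w u2(2)[OF x] x by simp
      qed
      show "w = u" using ex1_eq[OF U, of w u] w w1 w2 u by simp
    qed
  qed
qed

lemma relmatch_relMap:
  assumes f: "is_smap C X Y f" and ST: "is_subsset S T" and R: "is_relmatch C S T X Y f K k P v"
  shows "\<exists>\<alpha> \<beta>. is_relMap C S T X Y f P \<alpha> \<beta> \<and> v \<in> hom C K P \<and>
     (\<forall>n. \<forall>x\<in>Simp S n. Comp C (\<alpha> n x) v = k n x) \<and>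
     (\<forall>n. \<forall>x\<in>Simp T n. Comp C (\<beta> n x) v = Comp C (f n) (k n x)) \<and>
     (\<exists>M c. is_Map C S X M c) \<and> (\<exists>M c. is_Map C S Y M c) \<and> (\<exists>M c. is_Map C T Y M c)"
proof -
  from R obtain MSX cSX MSY cSY MTY cTY a b p1 p2 where
    MSX: "is_Map C S X MSX cSX" and MSY: "is_Map C S Y MSY cSY" and MTY: "is_Map C T Y MTY cTY"
    and a: "a \<in> hom C MSX MSY" and ea: "\<forall>n. \<forall>x\<in>Simp S n. Comp C (cSY n x) a = Comp C (f n) (cSX n x)"
    and b: "b \<in> hom C MTY MSY" and eb: "\<forall>n. \<forall>x\<in>Simp S n. Comp C (cSY n x) b = cTY n x"
    and pb: "is_pullback C a b P p1 p2" and v: "v \<in> hom C K P"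
    and e1: "\<forall>n. \<forall>x\<in>Simp S n. Comp C (cSX n x) (Comp C p1 v) = k n x"
    and e2: "\<forall>n. \<forall>x\<in>Simp T n. Comp C (cTY n x) (Comp C p2 v) = Comp C (f n) (k n x)"
    unfolding is_relmatch_def by blast
  have p1: "p1 \<in> hom C P MSX" and p2: "p2 \<in> hom C P MTY" using pbD[OF pb a b] by auto
  have RM: "is_relMap C S T X Y f P (\<lambda>n x. Comp C (cSX n x) p1) (\<lambda>n x. Comp C (cTY n x) p2)"
    using relpb[OF f ST MSX MSY MTY a _ b _ pb] ea eb by blast
  have "\<forall>n. \<forall>x\<in>Simp S n. Comp C (Comp C (cSX n x) p1) v = k n x"
    using assoc[OF v p1 cone_hom[OF Map_cone[OF MSX]]] e1 by simp
  moreover have "\<forall>n. \<forall>x\<in>Simp T n. Comp C (Comp C (cTY n x) p2) v = Comp C (f n) (k n x)"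
    using assoc[OF v p2 cone_hom[OF Map_cone[OF MTY]]] e2 by simp
  ultimately show ?thesis using RM v MSX MSY MTY by blast
qed

lemma relMap_exists:
  assumes f: "is_smap C X Y f" and ST: "is_subsset S T"
    and MSX: "is_Map C S X MSX cSX" and MSY: "is_Map C S Y MSY cSY" and MTY: "is_Map C T Y MTY cTY"
  shows "\<exists>a b P p1 p2. a \<in> hom C MSX MSY \<and> (\<forall>n. \<forall>x\<in>Simp S n. Comp C (cSY n x) a = Comp C (f n) (cSX n x)) \<and>
        b \<in> hom C MTY MSY \<and> (\<forall>n. \<forall>x\<in>Simp S n. Comp C (cSY n x) b = cTY n x) \<and>
        is_pullback C a b P p1 p2 \<and>
        is_relMap C S T X Y f P (\<lambda>n x. Comp C (cSX n x) p1) (\<lambda>n x. Comp C (cTY n x) p2)"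
proof -
  obtain a where a: "a \<in> hom C MSX MSY" "\<And>n x. x \<in> Simp S n \<Longrightarrow> Comp C (cSY n x) a = Comp C (f n) (cSX n x)"
    using Map_univ[OF MSY cone_post[OF f Map_cone[OF MSX]]] by blast
  obtain b where b: "b \<in> hom C MTY MSY" "\<And>n x. x \<in> Simp S n \<Longrightarrow> Comp C (cSY n x) b = cTY n x"
    using Map_univ[OF MSY cone_restrict[OF ST Map_cone[OF MTY]]] by blast
  obtain P p1 p2 where pb: "is_pullback C a b P p1 p2" using has_pb[OF a(1) b(1)] by blast
  show ?thesis using a b pb relpb[OF f ST MSX MSY MTY a(1) a(2) b(1) b(2) pb] by blast
qed

lemma relmatch_exists:
  assumes f: "is_smap C X Y f" and ST: "is_subsset S T"
    and MSX: "is_Map C S X MSX cSX" and MSY: "is_Map C S Y MSY cSY" and MTY: "is_Map C T Y MTY cTY"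
    and k: "is_cone C T X K k"
  shows "\<exists>P v. is_relmatch C S T X Y f K k P v"
proof -
  obtain a b P p1 p2 where a: "a \<in> hom C MSX MSY" "\<forall>n. \<forall>x\<in>Simp S n. Comp C (cSY n x) a = Comp C (f n) (cSX n x)"
     and b: "b \<in> hom C MTY MSY" "\<forall>n. \<forall>x\<in>Simp S n. Comp C (cSY n x) b = cTY n x"
     and pb: "is_pullback C a b P p1 p2"
     and RM: "is_relMap C S T X Y f P (\<lambda>n x. Comp C (cSX n x) p1) (\<lambda>n x. Comp C (cTY n x) p2)"
    using relMap_exists[OF f ST MSX MSY MTY] by blast
  have p1: "p1 \<in> hom C P MSX" and p2: "p2 \<in> hom C P MTY" using pbD[OF pb a(1) b(1)] by auto
  have rc: "is_relcone C S T X Y f K k (\<lambda>n x. Comp C (f n) (k n x))"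
    unfolding is_relcone_def using cone_restrict[OF ST k] cone_post[OF f k] by simp
  obtain v where v: "v \<in> hom C K P" "\<And>n x. x \<in> Simp S n \<Longrightarrow> Comp C (Comp C (cSX n x) p1) v = k n x"
     "\<And>n x. x \<in> Simp T n \<Longrightarrow> Comp C (Comp C (cTY n x) p2) v = Comp C (f n) (k n x)"
    using relMap_univ[OF RM rc] by blast
  have "\<forall>n. \<forall>x\<in>Simp S n. Comp C (cSX n x) (Comp C p1 v) = k n x"
    using assoc[OF v(1) p1 cone_hom[OF Map_cone[OF MSX]]] v(2) by simp
  moreover have "\<forall>n. \<forall>x\<in>Simp T n. Comp C (cTY n x) (Comp C p2 v) = Comp C (f n) (k n x)"
    using assoc[OF v(1) p2 cone_hom[OF Map_cone[OF MTY]]] v(3) by simp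
  ultimately have "is_relmatch C S T X Y f K k P v"
    unfolding is_relmatch_def using MSX MSY MTY a b pb v(1) by blast
  then show ?thesis by blast
qed

lemma Map_empty:
  assumes t: "is_terminal C t" and E: "\<And>n. Simp E n = {}"
  shows "is_Map C E X t c"
  unfolding is_Map_def is_cone_def using t E unfolding is_terminal_def by auto

lemma Map_full:
  assumes ST: "is_subsset S T" and full: "\<And>n. Simp T n \<subseteq> Simp S n" and M: "is_Map C S X M c"
  shows "is_Map C T X M c"
proof -
  have eq: "Simp T n = Simp S n" for n using full subsset_sub[OF ST] by blast
  have cone: "is_cone C T X L d" if "is_cone C S X L d" for L d
    using that subsset_act[OF ST] unfolding is_cone_def eq by simp
  show ?thesis
    using M cone_restrict[OF ST] cone unfolding is_Map_def eq by metis
qed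

lemma simplex_sset: "is_sset (simplex n)"
  unfolding is_sset_def simplex_def
  using dcomp_dmor dcomp_did_right dcomp_assoc by auto

lemma Map_simplex:
  assumes X: "is_sobj C X"
  shows "is_Map C (simplex n) X (SOb X n) (\<lambda>m \<theta>. SMor X m n \<theta>)"
  unfolding is_Map_def
proof (intro conjI allI impI)
  show "is_cone C (simplex n) X (SOb X n) (\<lambda>m \<theta>. SMor X m n \<theta>)"
    unfolding is_cone_def simplex_def using sobj_obj[OF X] sobj_hom[OF X] sobj_comp[OF X] by auto
  fix L d assume d: "is_cone C (simplex n) X L d"
  have dn: "did n \<in> Simp (simplex n) n" using did_dmor by (simp add: simplex_def)
  have u: "d n (did n) \<in> hom C L (SOb X n)" using cone_hom[OF d dn] .
  have e: "Comp C (SMor X m n \<theta>) (d n (did n)) = d m \<theta>" if "\<theta> \<in> Simp (simplex n) m" for m \<theta>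
  proof -
    have t: "\<theta> \<in> dmor m n" using that by (simp add: simplex_def)
    show ?thesis using cone_nat[OF d t dn] dcomp_did_left[OF t] by (simp add: simplex_def)
  qed
  show "\<exists>!u. u \<in> hom C L (SOb X n) \<and> (\<forall>m. \<forall>\<theta>\<in>Simp (simplex n) m. Comp C (SMor X m n \<theta>) u = d m \<theta>)"
  proof (rule ex1I[of _ "d n (did n)"])
    show "d n (did n) \<in> hom C L (SOb X n) \<and> (\<forall>m. \<forall>\<theta>\<in>Simp (simplex n) m. Comp C (SMor X m n \<theta>) (d n (did n)) = d m \<theta>)"
      using u e by simp
    fix w assume w: "w \<in> hom C L (SOb X n) \<and> (\<forall>m. \<forall>\<theta>\<in>Simp (simplex n) m. Comp C (SMor X m n \<theta>) w = d m \<theta>)"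
    then have "Comp C (SMor X n n (did n)) w = d n (did n)" using dn by blast
    then show "w = d n (did n)" using id_l[of w L "SOb X n"] w sobj_id[OF X] by simp
  qed
qed

end


lemma bdry_simp: "\<theta> \<in> Simp (bdry n) m \<longleftrightarrow> \<theta> \<in> dmor m n \<and> \<not> surjd m n \<theta>"
  "Act (bdry n) = (\<lambda>k m \<phi> \<theta>. dcomp k \<theta> \<phi>)"
  by (auto simp: bdry_def surjd_def)

lemma simplex_simp: "Simp (simplex n) m = dmor m n" "Act (simplex n) = (\<lambda>k m \<phi> \<theta>. dcomp k \<theta> \<phi>)"
  by (auto simp: simplex_def)

lemma bdry_sset: "is_sset (bdry n)"
  unfolding is_sset_def bdry_simp
  using dcomp_dmor dcomp_did_right dcomp_assoc surjd_dcomp_left by metis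

lemma bdry_sub: "is_subsset (bdry n) (simplex n)"
  unfolding is_subsset_def using bdry_sset dcat.simplex_sset
  by (auto simp: bdry_simp simplex_simp is_sset_def dcomp_dmor dcomp_did_right dcomp_assoc)

context dcat begin

lemma pull_cone:
  assumes A: "is_subsset A T" and x: "x \<in> Simp T n"
    and B: "\<And>m \<theta>. \<theta> \<in> Simp B m \<Longrightarrow> \<theta> \<in> dmor m n \<and> Act T m n \<theta> x \<in> Simp A m"
    and BA: "Act B = (\<lambda>k m \<phi> \<theta>. dcomp k \<theta> \<phi>)"
    and c: "is_cone C A X L c"
  shows "is_cone C B X L (\<lambda>m \<theta>. c m (Act T m n \<theta> x))"
  unfolding is_cone_def
proof (intro conjI allI impI ballI)
  show "L \<in> Obj C" using cone_obj[OF c] .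
  fix m \<theta> assume "\<theta> \<in> Simp B m" then show "c m (Act T m n \<theta> x) \<in> hom C L (SOb X m)"
    using cone_hom[OF c] B by blast
next
  fix k m \<phi> \<theta> assume p: "\<phi> \<in> dmor k m" and t: "\<theta> \<in> Simp B m"
  have T: "is_sset T" using subsset_sset[OF A] by simp
  have "Comp C (SMor X k m \<phi>) (c m (Act T m n \<theta> x)) = c k (Act A k m \<phi> (Act T m n \<theta> x))"
    using cone_nat[OF c p] B[OF t] by simp
  also have "\<dots> = c k (Act T k n (dcomp k \<theta> \<phi>) x)"
    using subsset_act[OF A p] B[OF t] sset_comp[OF T p _ x] by simp
  finally show "Comp C (SMor X k m \<phi>) (c m (Act T m n \<theta> x)) = c k (Act T k n (Act B k m \<phi> \<theta>) x)"
    using BA by simp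
qed

lemma ext_uniq:
  assumes gc: "good_cell T S n x" and X: "is_sobj C X"
    and c1: "is_cone C (cell T S n x) X L c1" and c2: "is_cone C (cell T S n x) X L c2"
    and eS: "\<And>m y. y \<in> Simp S m \<Longrightarrow> c1 m y = c2 m y" and ex: "c1 n x = c2 n x"
    and y: "y \<in> Simp (cell T S n x) m"
  shows "c1 m y = c2 m y"
proof (cases "y \<in> Simp S m")
  case True then show ?thesis using eS by simp
next
  case False
  then obtain \<sigma> where s: "\<sigma> \<in> dmor m n" "y = Act T m n \<sigma> x" using cell_char[OF gc y] by blast
  have T: "is_sset T" and xT: "x \<in> Simp T n" using gc unfolding good_cell_def using subsset_sset by auto
  have xc: "x \<in> Simp (cell T S n x) n" using cell_x[OF T xT] .
  show ?thesis using cone_nat[OF c1 s(1) xc] cone_nat[OF c2 s(1) xc] ex s(2) by (simp add: cell_simps)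
qed

lemma ext_exists:
  assumes gc: "good_cell T S n x" and X: "is_sobj C X"
    and c: "is_cone C S X L c" and g: "g \<in> hom C L (SOb X n)"
    and hyp: "\<And>m \<theta>. \<theta> \<in> dmor m n \<Longrightarrow> \<not> surjd m n \<theta> \<Longrightarrow> c m (Act T m n \<theta> x) = Comp C (SMor X m n \<theta>) g"
  shows "\<exists>c'. is_cone C (cell T S n x) X L c' \<and> (\<forall>m. \<forall>y\<in>Simp S m. c' m y = c m y) \<and> c' n x = g"
proof -
  have S: "is_subsset S T" and xT: "x \<in> Simp T n" and nd: "\<not> degenerate T n x" and xS: "x \<notin> Simp S n"
    and bd: "\<And>m \<theta>. \<theta> \<in> dmor m n \<Longrightarrow> \<not> surjd m n \<theta> \<Longrightarrow> Act T m n \<theta> x \<in> Simp S m"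
    using gc unfolding good_cell_def by auto
  have T: "is_sset T" using subsset_sset[OF S] by simp
  define c' where "c' = (\<lambda>m y. if y \<in> Simp S m then c m y
      else Comp C (SMor X m n (SOME \<sigma>. \<sigma> \<in> dmor m n \<and> y = Act T m n \<sigma> x)) g)"
  have K: "c' m (Act T m n \<rho> x) = Comp C (SMor X m n \<rho>) g" if r: "\<rho> \<in> dmor m n" for m \<rho>
  proof (cases "surjd m n \<rho>")
    case True
    have nS: "Act T m n \<rho> x \<notin> Simp S m" using surj_not_in_sub[OF S xT xS r True] .
    define \<sigma> where "\<sigma> = (SOME \<sigma>. \<sigma> \<in> dmor m n \<and> Act T m n \<rho> x = Act T m n \<sigma> x)"
    have "\<sigma> \<in> dmor m n \<and> Act T m n \<rho> x = Act T m n \<sigma> x"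
      unfolding \<sigma>_def by (rule someI[of _ \<rho>]) (use r in simp)
    then have "\<rho> = \<sigma>" using EZ[OF T xT nd r True] by blast
    then show ?thesis using nS by (simp add: c'_def \<sigma>_def)
  next
    case False
    then show ?thesis using bd[OF r False] hyp[OF r False] by (simp add: c'_def)
  qed
  have cS: "c' m y = c m y" if "y \<in> Simp S m" for m y using that by (simp add: c'_def)
  have cx: "c' n x = g"
    using K[OF did_dmor[of n]] sset_id[OF T xT] sobj_id[OF X] id_l[OF g] by simp
  have cone: "is_cone C (cell T S n x) X L c'"
    unfolding is_cone_def
  proof (intro conjI allI impI ballI)
    show "L \<in> Obj C" using cone_obj[OF c] .
    fix m y assume y: "y \<in> Simp (cell T S n x) m"
    show "c' m y \<in> hom C L (SOb X m)"
    proof (cases "y \<in> Simp S m")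
      case True then show ?thesis using cS cone_hom[OF c] by simp
    next
      case False
      then obtain \<sigma> where s: "\<sigma> \<in> dmor m n" "y = Act T m n \<sigma> x" using cell_char[OF gc y] by blast
      show ?thesis using K[OF s(1)] s(2) comp_hom[OF g sobj_hom[OF X s(1)]] by simp
    qed
  next
    fix k m \<phi> y assume p: "\<phi> \<in> dmor k m" and y: "y \<in> Simp (cell T S n x) m"
    show "Comp C (SMor X k m \<phi>) (c' m y) = c' k (Act (cell T S n x) k m \<phi> y)"
    proof (cases "y \<in> Simp S m")
      case True
      then show ?thesis using cS[OF True] cS[OF subsset_closed[OF S p True]] cone_nat[OF c p True]
          subsset_act[OF S p True] by (simp add: cell_simps)
    next
      case False
      then obtain \<sigma> where s: "\<sigma> \<in> dmor m n" "y = Act T m n \<sigma> x" using cell_char[OF gc y] by blast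
      have "Comp C (SMor X k m \<phi>) (c' m y) = Comp C (SMor X k m \<phi>) (Comp C (SMor X m n \<sigma>) g)"
        using K[OF s(1)] s(2) by simp
      also have "\<dots> = Comp C (SMor X k n (dcomp k \<sigma> \<phi>)) g"
        using assoc[OF g sobj_hom[OF X s(1)] sobj_hom[OF X p]] sobj_comp[OF X p s(1)] by simp
      also have "\<dots> = c' k (Act T k n (dcomp k \<sigma> \<phi>) x)" using K[OF dcomp_dmor[OF p s(1)]] by simp
      finally show ?thesis using sset_comp[OF T p s(1) xT] s(2) by (simp add: cell_simps)
    qed
  qed
  show ?thesis using cone cS cx by blast
qed

lemma gc_bdry:
  assumes gc: "good_cell T S n x"
  shows "\<And>m \<theta>. \<theta> \<in> Simp (bdry n) m \<Longrightarrow> \<theta> \<in> dmor m n \<and> Act T m n \<theta> x \<in> Simp S m"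
  using gc unfolding good_cell_def bdry_simp by auto

lemma gc_simplex:
  assumes gc: "good_cell T S n x"
  shows "\<And>m \<theta>. \<theta> \<in> Simp (simplex n) m \<Longrightarrow> \<theta> \<in> dmor m n \<and> Act T m n \<theta> x \<in> Simp (cell T S n x) m"
  by (auto simp: simplex_simp cell_simps)

lemma gc_facts:
  assumes gc: "good_cell T S n x"
  shows "is_subsset S T" "x \<in> Simp T n" "is_sset T" "is_subsset (cell T S n x) T"
    "is_subsset S (cell T S n x)" "x \<in> Simp (cell T S n x) n"
  using gc subsset_sset cell_sset cell_sub cell_x unfolding good_cell_def by metis+

lemma Map_cell:
  assumes gc: "good_cell T S n x" and X: "is_sobj C X"
    and MS: "is_Map C S X MS cS" and MB: "is_Map C (bdry n) X MB cB"
  shows "\<exists>M c. is_Map C (cell T S n x) X M c"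
proof -
  note G = gc_facts[OF gc]
  have rc: "is_cone C (bdry n) X MS (\<lambda>m \<theta>. cS m (Act T m n \<theta> x))"
    using pull_cone[OF G(1) G(2) gc_bdry[OF gc] bdry_simp(2) Map_cone[OF MS]] .
  obtain r where r: "r \<in> hom C MS MB" "\<And>m \<theta>. \<theta> \<in> Simp (bdry n) m \<Longrightarrow> Comp C (cB m \<theta>) r = cS m (Act T m n \<theta> x)"
    using Map_univ[OF MB rc] by blast
  have yc: "is_cone C (bdry n) X (SOb X n) (\<lambda>m \<theta>. SMor X m n \<theta>)"
    using cone_restrict[OF bdry_sub Map_cone[OF Map_simplex[OF X]]] .
  obtain y where y: "y \<in> hom C (SOb X n) MB" "\<And>m \<theta>. \<theta> \<in> Simp (bdry n) m \<Longrightarrow> Comp C (cB m \<theta>) y = SMor X m n \<theta>"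
    using Map_univ[OF MB yc] by blast
  obtain M p1 p2 where pb: "is_pullback C r y M p1 p2" using has_pb[OF r(1) y(1)] by blast
  note P = pbD[OF pb r(1) y(1)]
  have hyp: "Comp C (cS m (Act T m n \<theta> x)) p1 = Comp C (SMor X m n \<theta>) p2"
    if t: "\<theta> \<in> dmor m n" "\<not> surjd m n \<theta>" for m \<theta>
  proof -
    have tb: "\<theta> \<in> Simp (bdry n) m" using t bdry_simp by simp
    have cb: "cB m \<theta> \<in> hom C MB (SOb X m)" using cone_hom[OF Map_cone[OF MB] tb] .
    have "Comp C (cS m (Act T m n \<theta> x)) p1 = Comp C (cB m \<theta>) (Comp C r p1)"
      using assoc[OF P(2) r(1) cb] r(2)[OF tb] by simp
    also have "\<dots> = Comp C (cB m \<theta>) (Comp C y p2)" using P(4) by simp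
    also have "\<dots> = Comp C (SMor X m n \<theta>) p2" using assoc[OF P(3) y(1) cb] y(2)[OF tb] by simp
    finally show ?thesis .
  qed
  obtain c' where c': "is_cone C (cell T S n x) X M c'" "\<And>m y. y \<in> Simp S m \<Longrightarrow> c' m y = Comp C (cS m y) p1"
     "c' n x = p2"
    using ext_exists[OF gc X cone_pre[OF X Map_cone[OF MS] P(2)] P(3) hyp] by blast
  have "is_Map C (cell T S n x) X M c'"
    unfolding is_Map_def
  proof (intro conjI c'(1) allI impI)
    fix L d assume d: "is_cone C (cell T S n x) X L d"
    obtain u1 where u1: "u1 \<in> hom C L MS" "\<And>m y. y \<in> Simp S m \<Longrightarrow> Comp C (cS m y) u1 = d m y"
      using Map_univ[OF MS cone_restrict[OF G(5) d]] by blast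
    have u2: "d n x \<in> hom C L (SOb X n)" using cone_hom[OF d G(6)] .
    have "Comp C r u1 = Comp C y (d n x)"
    proof (rule Map_uniq[OF MB X comp_hom[OF u1(1) r(1)] comp_hom[OF u2 y(1)]])
      fix m \<theta> assume tb: "\<theta> \<in> Simp (bdry n) m"
      have cb: "cB m \<theta> \<in> hom C MB (SOb X m)" using cone_hom[OF Map_cone[OF MB] tb] .
      have t: "\<theta> \<in> dmor m n" "Act T m n \<theta> x \<in> Simp S m" using gc_bdry[OF gc tb] by auto
      have "Comp C (cB m \<theta>) (Comp C r u1) = d m (Act T m n \<theta> x)"
        using assoc[OF u1(1) r(1) cb] r(2)[OF tb] u1(2)[OF t(2)] by simp
      also have "\<dots> = Comp C (cB m \<theta>) (Comp C y (d n x))"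
        using assoc[OF u2 y(1) cb] y(2)[OF tb] cone_nat[OF d t(1) G(6)] by (simp add: cell_simps)
      finally show "Comp C (cB m \<theta>) (Comp C r u1) = Comp C (cB m \<theta>) (Comp C y (d n x))" .
    qed
    from P(5)[OF u1(1) u2 this]
    have U: "\<exists>!u. u \<in> hom C L M \<and> Comp C p1 u = u1 \<and> Comp C p2 u = d n x" .
    then obtain u where u: "u \<in> hom C L M" "Comp C p1 u = u1" "Comp C p2 u = d n x" by blast
    have cu: "Comp C (c' m z) u = d m z" if z: "z \<in> Simp (cell T S n x) m" for m z
    proof (rule ext_uniq[OF gc X cone_pre[OF X c'(1) u(1)] d _ _ z])
      fix m y assume yS: "y \<in> Simp S m"
      show "Comp C (c' m y) u = d m y"
        using c'(2)[OF yS] assoc[OF u(1) P(2) cone_hom[OF Map_cone[OF MS] yS]] u(2) u1(2)[OF yS] by simp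
    next
      show "Comp C (c' n x) u = d n x" using c'(3) u(3) by simp
    qed
    show "\<exists>!u. u \<in> hom C L M \<and> (\<forall>m. \<forall>z\<in>Simp (cell T S n x) m. Comp C (c' m z) u = d m z)"
    proof (rule ex1I[of _ u])
      show "u \<in> hom C L M \<and> (\<forall>m. \<forall>z\<in>Simp (cell T S n x) m. Comp C (c' m z) u = d m z)"
        using u(1) cu by simp
      fix w assume w: "w \<in> hom C L M \<and> (\<forall>m. \<forall>z\<in>Simp (cell T S n x) m. Comp C (c' m z) w = d m z)"
      have w0: "w \<in> hom C L M" using w by simp
      have w1: "Comp C p1 w = u1"
      proof (rule Map_uniq[OF MS X comp_hom[OF w0 P(2)] u1(1)])
        fix m z assume zS: "z \<in> Simp S m"
        have zc: "z \<in> Simp (cell T S n x) m" using subsset_sub[OF G(5) zS] .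
        have "Comp C (c' m z) w = d m z" using w zc by blast
        then show "Comp C (cS m z) (Comp C p1 w) = Comp C (cS m z) u1"
          using assoc[OF w0 P(2) cone_hom[OF Map_cone[OF MS] zS]] c'(2)[OF zS] u1(2)[OF zS] by simp
      qed
      have "Comp C (c' n x) w = d n x" using w G(6) by blast
      then have w2: "Comp C p2 w = d n x" using c'(3) by simp
      show "w = u" using ex1_eq[OF U, of w u] w0 w1 w2 u by simp
    qed
  qed
  then show ?thesis by blast
qed

end


context dcat begin

lemma cell_cover:
  assumes f: "is_smap C X Y f" and gc: "good_cell T S n x"
    and M: "is_Map C (cell T S n x) X M cX"
    and Q: "is_relMap C S (cell T S n x) X Y f Q \<gamma> \<delta>"
    and Pn: "is_relMap C (bdry n) (simplex n) X Y f Pn \<alpha>n \<beta>n"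
    and vn: "vn \<in> hom C (SOb X n) Pn" "vn \<in> cov"
    and va: "\<And>m \<theta>. \<theta> \<in> Simp (bdry n) m \<Longrightarrow> Comp C (\<alpha>n m \<theta>) vn = SMor X m n \<theta>"
    and vb: "\<And>m \<theta>. \<theta> \<in> Simp (simplex n) m \<Longrightarrow> Comp C (\<beta>n m \<theta>) vn = Comp C (f m) (SMor X m n \<theta>)"
  shows "\<exists>u. u \<in> hom C M Q \<and> (\<forall>m. \<forall>y\<in>Simp S m. Comp C (\<gamma> m y) u = cX m y) \<and>
             (\<forall>m. \<forall>y\<in>Simp (cell T S n x) m. Comp C (\<delta> m y) u = Comp C (f m) (cX m y)) \<and> u \<in> cov"
proof -
  note G = gc_facts[OF gc]
  have X: "is_sobj C X" and Y: "is_sobj C Y" using smap_sobj[OF f] by auto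
  note cX = Map_cone[OF M]
  have QR: "is_relcone C S (cell T S n x) X Y f Q \<gamma> \<delta>" using relMap_relcone[OF Q] .
  note \<gamma>c = relcone_cone(1)[OF QR] and \<delta>c = relcone_cone(2)[OF QR]
  have PR: "is_relcone C (bdry n) (simplex n) X Y f Pn \<alpha>n \<beta>n" using relMap_relcone[OF Pn] .
  note \<alpha>c = relcone_cone(1)[OF PR] and \<beta>c = relcone_cone(2)[OF PR]
  have rcu: "is_relcone C S (cell T S n x) X Y f M cX (\<lambda>m y. Comp C (f m) (cX m y))"
    unfolding is_relcone_def using cone_restrict[OF G(5) cX] cone_post[OF f cX] by simp
  obtain u where u: "u \<in> hom C M Q" "\<And>m y. y \<in> Simp S m \<Longrightarrow> Comp C (\<gamma> m y) u = cX m y"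
    "\<And>m y. y \<in> Simp (cell T S n x) m \<Longrightarrow> Comp C (\<delta> m y) u = Comp C (f m) (cX m y)"
    using relMap_univ[OF Q rcu] by blast
  have e: "cX n x \<in> hom C M (SOb X n)" using cone_hom[OF cX G(6)] .
  have rc: "is_relcone C (bdry n) (simplex n) X Y f Q (\<lambda>m \<theta>. \<gamma> m (Act T m n \<theta> x)) (\<lambda>m \<theta>. \<delta> m (Act T m n \<theta> x))"
    unfolding is_relcone_def
    using pull_cone[OF G(1) G(2) gc_bdry[OF gc] bdry_simp(2) \<gamma>c]
      pull_cone[OF G(4) G(2) gc_simplex[OF gc] simplex_simp(2) \<delta>c]
      relcone_cone(3)[OF QR] gc_bdry[OF gc] by simp
  obtain r where r: "r \<in> hom C Q Pn" "\<And>m \<theta>. \<theta> \<in> Simp (bdry n) m \<Longrightarrow> Comp C (\<alpha>n m \<theta>) r = \<gamma> m (Act T m n \<theta> x)"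
    "\<And>m \<theta>. \<theta> \<in> Simp (simplex n) m \<Longrightarrow> Comp C (\<beta>n m \<theta>) r = \<delta> m (Act T m n \<theta> x)"
    using relMap_univ[OF Pn rc] by blast
  have sq: "Comp C r u = Comp C vn (cX n x)"
  proof (rule relMap_uniq[OF Pn f comp_hom[OF u(1) r(1)] comp_hom[OF e vn(1)]])
    fix m \<theta> assume tb: "\<theta> \<in> Simp (bdry n) m"
    have t: "\<theta> \<in> dmor m n" "Act T m n \<theta> x \<in> Simp S m" using gc_bdry[OF gc tb] by auto
    have ah: "\<alpha>n m \<theta> \<in> hom C Pn (SOb X m)" using cone_hom[OF \<alpha>c tb] .
    have "Comp C (\<alpha>n m \<theta>) (Comp C r u) = cX m (Act T m n \<theta> x)"
      using assoc[OF u(1) r(1) ah] r(2)[OF tb] u(2)[OF t(2)] by simp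
    also have "\<dots> = Comp C (\<alpha>n m \<theta>) (Comp C vn (cX n x))"
      using assoc[OF e vn(1) ah] va[OF tb] cone_nat[OF cX t(1) G(6)] by (simp add: cell_simps)
    finally show "Comp C (\<alpha>n m \<theta>) (Comp C r u) = Comp C (\<alpha>n m \<theta>) (Comp C vn (cX n x))" .
  next
    fix m \<theta> assume ts: "\<theta> \<in> Simp (simplex n) m"
    have t: "\<theta> \<in> dmor m n" "Act T m n \<theta> x \<in> Simp (cell T S n x) m" using gc_simplex[OF gc ts] by auto
    have bh: "\<beta>n m \<theta> \<in> hom C Pn (SOb Y m)" using cone_hom[OF \<beta>c ts] .
    have "Comp C (\<beta>n m \<theta>) (Comp C r u) = Comp C (f m) (cX m (Act T m n \<theta> x))"
      using assoc[OF u(1) r(1) bh] r(3)[OF ts] u(3)[OF t(2)] by simp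
    also have "\<dots> = Comp C (f m) (Comp C (SMor X m n \<theta>) (cX n x))"
      using cone_nat[OF cX t(1) G(6)] by (simp add: cell_simps)
    also have "\<dots> = Comp C (Comp C (f m) (SMor X m n \<theta>)) (cX n x)"
      using assoc[OF e sobj_hom[OF X t(1)] smap_hom[OF f]] .
    also have "\<dots> = Comp C (\<beta>n m \<theta>) (Comp C vn (cX n x))"
      using assoc[OF e vn(1) bh] vb[OF ts] by simp
    finally show "Comp C (\<beta>n m \<theta>) (Comp C r u) = Comp C (\<beta>n m \<theta>) (Comp C vn (cX n x))" .
  qed
  have pb: "is_pullback C r vn M u (cX n x)"
  proof (rule pbI[OF r(1) vn(1) u(1) e sq])
    fix L h1 h2 assume h1: "h1 \<in> hom C L Q" and h2: "h2 \<in> hom C L (SOb X n)" and h: "Comp C r h1 = Comp C vn h2"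
    have hyp: "Comp C (\<gamma> m (Act T m n \<theta> x)) h1 = Comp C (SMor X m n \<theta>) h2"
      if t: "\<theta> \<in> dmor m n" "\<not> surjd m n \<theta>" for m \<theta>
    proof -
      have tb: "\<theta> \<in> Simp (bdry n) m" using t bdry_simp by simp
      have ah: "\<alpha>n m \<theta> \<in> hom C Pn (SOb X m)" using cone_hom[OF \<alpha>c tb] .
      have "Comp C (\<gamma> m (Act T m n \<theta> x)) h1 = Comp C (\<alpha>n m \<theta>) (Comp C r h1)"
        using assoc[OF h1 r(1) ah] r(2)[OF tb] by simp
      also have "\<dots> = Comp C (\<alpha>n m \<theta>) (Comp C vn h2)" using h by simp
      also have "\<dots> = Comp C (SMor X m n \<theta>) h2" using assoc[OF h2 vn(1) ah] va[OF tb] by simp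
      finally show ?thesis .
    qed
    obtain c' where c': "is_cone C (cell T S n x) X L c'" "\<And>m y. y \<in> Simp S m \<Longrightarrow> c' m y = Comp C (\<gamma> m y) h1"
       "c' n x = h2"
      using ext_exists[OF gc X cone_pre[OF X \<gamma>c h1] h2 hyp] by blast
    obtain z where z: "z \<in> hom C L M" "\<And>m y. y \<in> Simp (cell T S n x) m \<Longrightarrow> Comp C (cX m y) z = c' m y"
      using Map_univ[OF M c'(1)] by blast
    have dx: "Comp C (\<delta> n x) h1 = Comp C (f n) h2"
    proof -
      have ds: "did n \<in> Simp (simplex n) n" using did_dmor by (simp add: simplex_simp)
      have bh: "\<beta>n n (did n) \<in> hom C Pn (SOb Y n)" using cone_hom[OF \<beta>c ds] .
      have "\<delta> n x = Comp C (\<beta>n n (did n)) r" using r(3)[OF ds] sset_id[OF G(3) G(2)] by simp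
      then have "Comp C (\<delta> n x) h1 = Comp C (\<beta>n n (did n)) (Comp C r h1)"
        using assoc[OF h1 r(1) bh] by simp
      also have "\<dots> = Comp C (Comp C (f n) (SMor X n n (did n))) h2"
        using assoc[OF h2 vn(1) bh] vb[OF ds] h by simp
      also have "\<dots> = Comp C (f n) h2"
        using sobj_id[OF X] id_r[OF smap_hom[OF f]] by simp
      finally show ?thesis .
    qed
    have fc': "Comp C (f m) (c' m y) = Comp C (\<delta> m y) h1" if y: "y \<in> Simp (cell T S n x) m" for m y
    proof (rule ext_uniq[OF gc Y cone_post[OF f c'(1)] cone_pre[OF Y \<delta>c h1] _ _ y])
      fix m y assume yS: "y \<in> Simp S m"
      have "Comp C (f m) (c' m y) = Comp C (Comp C (f m) (\<gamma> m y)) h1"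
        using c'(2)[OF yS] assoc[OF h1 cone_hom[OF \<gamma>c yS] smap_hom[OF f]] by simp
      then show "Comp C (f m) (c' m y) = Comp C (\<delta> m y) h1"
        using relcone_cone(3)[OF QR yS] by simp
    next
      show "Comp C (f n) (c' n x) = Comp C (\<delta> n x) h1" using c'(3) dx by simp
    qed
    have uz: "Comp C u z = h1"
    proof (rule relMap_uniq[OF Q f comp_hom[OF z(1) u(1)] h1])
      fix m y assume yS: "y \<in> Simp S m"
      show "Comp C (\<gamma> m y) (Comp C u z) = Comp C (\<gamma> m y) h1"
        using assoc[OF z(1) u(1) cone_hom[OF \<gamma>c yS]] u(2)[OF yS] z(2)[OF subsset_sub[OF G(5) yS]] c'(2)[OF yS]
        by simp
    next
      fix m y assume y: "y \<in> Simp (cell T S n x) m"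
      have "Comp C (\<delta> m y) (Comp C u z) = Comp C (Comp C (f m) (cX m y)) z"
        using assoc[OF z(1) u(1) cone_hom[OF \<delta>c y]] u(3)[OF y] by simp
      also have "\<dots> = Comp C (f m) (c' m y)"
        using assoc[OF z(1) cone_hom[OF cX y] smap_hom[OF f]] z(2)[OF y] by simp
      finally show "Comp C (\<delta> m y) (Comp C u z) = Comp C (\<delta> m y) h1" using fc'[OF y] by simp
    qed
    have ez: "Comp C (cX n x) z = h2" using z(2)[OF G(6)] c'(3) by simp
    show "\<exists>!w. w \<in> hom C L M \<and> Comp C u w = h1 \<and> Comp C (cX n x) w = h2"
    proof (rule ex1I[of _ z])
      show "z \<in> hom C L M \<and> Comp C u z = h1 \<and> Comp C (cX n x) z = h2" using z(1) uz ez by simp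
      fix w assume w: "w \<in> hom C L M \<and> Comp C u w = h1 \<and> Comp C (cX n x) w = h2"
      have w0: "w \<in> hom C L M" using w by simp
      show "w = z"
      proof (rule Map_uniq[OF M X w0 z(1)])
        fix m y assume y: "y \<in> Simp (cell T S n x) m"
        have "Comp C (cX m y) w = c' m y"
        proof (rule ext_uniq[OF gc X cone_pre[OF X cX w0] c'(1) _ _ y])
          fix m y assume yS: "y \<in> Simp S m"
          have "Comp C (cX m y) w = Comp C (\<gamma> m y) (Comp C u w)"
            using assoc[OF w0 u(1) cone_hom[OF \<gamma>c yS]] u(2)[OF yS] by simp
          then show "Comp C (cX m y) w = c' m y" using w c'(2)[OF yS] by simp
        next
          show "Comp C (cX n x) w = c' n x" using w c'(3) by simp
        qed
        then show "Comp C (cX m y) w = Comp C (cX m y) z" using z(2)[OF y] by simp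
      qed
    qed
  qed
  have "u \<in> cov" using cov_pb[OF pb vn(2)] .
  then show ?thesis using u by blast
qed

end


context dcat begin

lemma id_cov: "a \<in> Obj C \<Longrightarrow> Idm C a \<in> cov"
  using dc unfolding descent_category_def by blast

lemma hyper_vn:
  assumes H: "hypercover C cov X Y f" and MBX: "is_Map C (bdry n) X MBX cBX" and MBY: "is_Map C (bdry n) Y MBY cBY"
  shows "\<exists>Pn \<alpha>n \<beta>n vn. is_relMap C (bdry n) (simplex n) X Y f Pn \<alpha>n \<beta>n \<and> vn \<in> hom C (SOb X n) Pn \<and> vn \<in> cov \<and>
     (\<forall>m. \<forall>\<theta>\<in>Simp (bdry n) m. Comp C (\<alpha>n m \<theta>) vn = SMor X m n \<theta>) \<and>
     (\<forall>m. \<forall>\<theta>\<in>Simp (simplex n) m. Comp C (\<beta>n m \<theta>) vn = Comp C (f m) (SMor X m n \<theta>))"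
proof -
  have f: "is_smap C X Y f" using H unfolding hypercover_def by simp
  have X: "is_sobj C X" and Y: "is_sobj C Y" using smap_sobj[OF f] by auto
  obtain P v where R: "is_relmatch C (bdry n) (simplex n) X Y f (SOb X n) (\<lambda>m \<theta>. SMor X m n \<theta>) P v"
    using relmatch_exists[OF f bdry_sub MBX MBY Map_simplex[OF Y] Map_cone[OF Map_simplex[OF X]]] by blast
  have "v \<in> cov" using H R unfolding hypercover_def by blast
  then show ?thesis using relmatch_relMap[OF f bdry_sub R] by blast
qed

lemma cone_full:
  assumes ST: "is_subsset S T" and full: "\<And>n. Simp T n \<subseteq> Simp S n" and c: "is_cone C S X L c"
  shows "is_cone C T X L c"
proof -
  have eq: "Simp T n = Simp S n" for n using full subsset_sub[OF ST] by blast
  show ?thesis using c subsset_act[OF ST] unfolding is_cone_def eq by simp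
qed

lemma full_cover:
  assumes f: "is_smap C X Y f" and ST: "is_subsset S T" and full: "\<And>n. Simp T n \<subseteq> Simp S n"
    and K: "is_Map C T X K k" and P: "is_relMap C S T X Y f P \<alpha> \<beta>" and v: "v \<in> hom C K P"
    and va: "\<And>n y. y \<in> Simp S n \<Longrightarrow> Comp C (\<alpha> n y) v = k n y"
    and vb: "\<And>n y. y \<in> Simp T n \<Longrightarrow> Comp C (\<beta> n y) v = Comp C (f n) (k n y)"
  shows "v \<in> cov"
proof -
  have X: "is_sobj C X" using smap_sobj[OF f] by simp
  have PR: "is_relcone C S T X Y f P \<alpha> \<beta>" using relMap_relcone[OF P] .
  note \<alpha>c = relcone_cone(1)[OF PR] and \<beta>c = relcone_cone(2)[OF PR]
  have Pobj: "P \<in> Obj C" using cone_obj[OF \<alpha>c] .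
  have iP: "Idm C P \<in> hom C P P" using id_hom[OF Pobj] .
  have pb: "is_pullback C (Idm C P) (Idm C P) K v v"
  proof (rule pbI[OF iP iP v v refl])
    fix L q1 q2 assume q1: "q1 \<in> hom C L P" and q2: "q2 \<in> hom C L P" and e: "Comp C (Idm C P) q1 = Comp C (Idm C P) q2"
    have q12: "q2 = q1" using e id_l[OF q1] id_l[OF q2] by simp
    have cq: "is_cone C T X L (\<lambda>n y. Comp C (\<alpha> n y) q1)"
      using cone_full[OF ST full cone_pre[OF X \<alpha>c q1]] .
    obtain u where u: "u \<in> hom C L K" "\<And>n y. y \<in> Simp T n \<Longrightarrow> Comp C (k n y) u = Comp C (\<alpha> n y) q1"
      using Map_univ[OF K cq] by blast
    have vu: "Comp C v u = q1"
    proof (rule relMap_uniq[OF P f comp_hom[OF u(1) v] q1])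
      fix n y assume yS: "y \<in> Simp S n"
      show "Comp C (\<alpha> n y) (Comp C v u) = Comp C (\<alpha> n y) q1"
        using assoc[OF u(1) v cone_hom[OF \<alpha>c yS]] va[OF yS] u(2)[OF subsset_sub[OF ST yS]] by simp
    next
      fix n y assume yT: "y \<in> Simp T n"
      have yS: "y \<in> Simp S n" using full yT by blast
      have "Comp C (\<beta> n y) (Comp C v u) = Comp C (Comp C (f n) (k n y)) u"
        using assoc[OF u(1) v cone_hom[OF \<beta>c yT]] vb[OF yT] by simp
      also have "\<dots> = Comp C (f n) (Comp C (\<alpha> n y) q1)"
        using assoc[OF u(1) cone_hom[OF Map_cone[OF K] yT] smap_hom[OF f]] u(2)[OF yT] by simp
      also have "\<dots> = Comp C (\<beta> n y) q1"
        using assoc[OF q1 cone_hom[OF \<alpha>c yS] smap_hom[OF f]] relcone_cone(3)[OF PR yS] by simp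
      finally show "Comp C (\<beta> n y) (Comp C v u) = Comp C (\<beta> n y) q1" .
    qed
    show "\<exists>!u. u \<in> hom C L K \<and> Comp C v u = q1 \<and> Comp C v u = q2"
    proof (rule ex1I[of _ u])
      show "u \<in> hom C L K \<and> Comp C v u = q1 \<and> Comp C v u = q2" using u(1) vu q12 by simp
      fix w assume w: "w \<in> hom C L K \<and> Comp C v w = q1 \<and> Comp C v w = q2"
      have w0: "w \<in> hom C L K" using w by simp
      show "w = u"
      proof (rule Map_uniq[OF K X w0 u(1)])
        fix n y assume yT: "y \<in> Simp T n"
        have yS: "y \<in> Simp S n" using full yT by blast
        have "Comp C (k n y) w = Comp C (\<alpha> n y) (Comp C v w)"
          using assoc[OF w0 v cone_hom[OF \<alpha>c yS]] va[OF yS] by simp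
        then show "Comp C (k n y) w = Comp C (k n y) u" using w u(2)[OF yT] by simp
      qed
    qed
  qed
  show ?thesis using cov_pb[OF pb id_cov[OF Pobj]] .
qed

lemma step_cover:
  assumes f: "is_smap C X Y f" and gc: "good_cell T S n x"
    and ST: "is_subsset S T"
    and K: "is_Map C T X K k"
    and M: "is_Map C (cell T S n x) X M cX"
    and P: "is_relMap C S T X Y f P \<alpha> \<beta>" and v: "v \<in> hom C K P"
    and va: "\<And>m y. y \<in> Simp S m \<Longrightarrow> Comp C (\<alpha> m y) v = k m y"
    and vb: "\<And>m y. y \<in> Simp T m \<Longrightarrow> Comp C (\<beta> m y) v = Comp C (f m) (k m y)"
    and P': "is_relMap C (cell T S n x) T X Y f P' \<alpha>' \<beta>'" and v': "v' \<in> hom C K P'" "v' \<in> cov"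
    and va': "\<And>m y. y \<in> Simp (cell T S n x) m \<Longrightarrow> Comp C (\<alpha>' m y) v' = k m y"
    and vb': "\<And>m y. y \<in> Simp T m \<Longrightarrow> Comp C (\<beta>' m y) v' = Comp C (f m) (k m y)"
    and Q: "is_relMap C S (cell T S n x) X Y f Q \<gamma> \<delta>"
    and u: "u \<in> hom C M Q" "u \<in> cov" "\<And>m y. y \<in> Simp S m \<Longrightarrow> Comp C (\<gamma> m y) u = cX m y"
      "\<And>m y. y \<in> Simp (cell T S n x) m \<Longrightarrow> Comp C (\<delta> m y) u = Comp C (f m) (cX m y)"
  shows "v \<in> cov"
proof -
  note G = gc_facts[OF gc]
  have X: "is_sobj C X" and Y: "is_sobj C Y" using smap_sobj[OF f] by auto
  note cX = Map_cone[OF M]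
  have PR: "is_relcone C S T X Y f P \<alpha> \<beta>" using relMap_relcone[OF P] .
  note \<alpha>c = relcone_cone(1)[OF PR] and \<beta>c = relcone_cone(2)[OF PR]
  have PR': "is_relcone C (cell T S n x) T X Y f P' \<alpha>' \<beta>'" using relMap_relcone[OF P'] .
  note \<alpha>c' = relcone_cone(1)[OF PR'] and \<beta>c' = relcone_cone(2)[OF PR']
  have QR: "is_relcone C S (cell T S n x) X Y f Q \<gamma> \<delta>" using relMap_relcone[OF Q] .
  note \<gamma>c = relcone_cone(1)[OF QR] and \<delta>c = relcone_cone(2)[OF QR]
  have rw: "is_relcone C S T X Y f P' \<alpha>' \<beta>'"
    unfolding is_relcone_def using cone_restrict[OF G(5) \<alpha>c'] \<beta>c' relcone_cone(3)[OF PR'] subsset_sub[OF G(5)]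
    by simp
  obtain w where w: "w \<in> hom C P' P" "\<And>m y. y \<in> Simp S m \<Longrightarrow> Comp C (\<alpha> m y) w = \<alpha>' m y"
    "\<And>m y. y \<in> Simp T m \<Longrightarrow> Comp C (\<beta> m y) w = \<beta>' m y"
    using relMap_univ[OF P rw] by blast
  obtain p where p: "p \<in> hom C P' M" "\<And>m y. y \<in> Simp (cell T S n x) m \<Longrightarrow> Comp C (cX m y) p = \<alpha>' m y"
    using Map_univ[OF M \<alpha>c'] by blast
  have rq: "is_relcone C S (cell T S n x) X Y f P \<alpha> \<beta>"
    unfolding is_relcone_def using \<alpha>c cone_restrict[OF G(4) \<beta>c] relcone_cone(3)[OF PR] by simp
  obtain q where q: "q \<in> hom C P Q" "\<And>m y. y \<in> Simp S m \<Longrightarrow> Comp C (\<gamma> m y) q = \<alpha> m y"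
    "\<And>m y. y \<in> Simp (cell T S n x) m \<Longrightarrow> Comp C (\<delta> m y) q = \<beta> m y"
    using relMap_univ[OF Q rq] by blast
  have sq: "Comp C q w = Comp C u p"
  proof (rule relMap_uniq[OF Q f comp_hom[OF w(1) q(1)] comp_hom[OF p(1) u(1)]])
    fix m y assume yS: "y \<in> Simp S m"
    have yc: "y \<in> Simp (cell T S n x) m" using subsset_sub[OF G(5) yS] .
    have "Comp C (\<gamma> m y) (Comp C q w) = \<alpha>' m y"
      using assoc[OF w(1) q(1) cone_hom[OF \<gamma>c yS]] q(2)[OF yS] w(2)[OF yS] by simp
    also have "\<dots> = Comp C (\<gamma> m y) (Comp C u p)"
      using assoc[OF p(1) u(1) cone_hom[OF \<gamma>c yS]] u(3)[OF yS] p(2)[OF yc] by simp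
    finally show "Comp C (\<gamma> m y) (Comp C q w) = Comp C (\<gamma> m y) (Comp C u p)" .
  next
    fix m y assume yc: "y \<in> Simp (cell T S n x) m"
    have yT: "y \<in> Simp T m" using subsset_sub[OF G(4) yc] .
    have "Comp C (\<delta> m y) (Comp C q w) = \<beta>' m y"
      using assoc[OF w(1) q(1) cone_hom[OF \<delta>c yc]] q(3)[OF yc] w(3)[OF yT] by simp
    also have "\<dots> = Comp C (f m) (\<alpha>' m y)" using relcone_cone(3)[OF PR' yc] by simp
    also have "\<dots> = Comp C (Comp C (f m) (cX m y)) p"
      using assoc[OF p(1) cone_hom[OF cX yc] smap_hom[OF f]] p(2)[OF yc] by simp
    also have "\<dots> = Comp C (\<delta> m y) (Comp C u p)"
      using assoc[OF p(1) u(1) cone_hom[OF \<delta>c yc]] u(4)[OF yc] by simp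
    finally show "Comp C (\<delta> m y) (Comp C q w) = Comp C (\<delta> m y) (Comp C u p)" .
  qed
  have pb: "is_pullback C q u P' w p"
  proof (rule pbI[OF q(1) u(1) w(1) p(1) sq])
    fix L h1 h2 assume h1: "h1 \<in> hom C L P" and h2: "h2 \<in> hom C L M" and h: "Comp C q h1 = Comp C u h2"
    have rz: "is_relcone C (cell T S n x) T X Y f L (\<lambda>m y. Comp C (cX m y) h2) (\<lambda>m y. Comp C (\<beta> m y) h1)"
      unfolding is_relcone_def
    proof (intro conjI cone_pre[OF X cX h2] cone_pre[OF Y \<beta>c h1] allI ballI)
      fix m y assume yc: "y \<in> Simp (cell T S n x) m"
      have "Comp C (f m) (Comp C (cX m y) h2) = Comp C (Comp C (f m) (cX m y)) h2"
        using assoc[OF h2 cone_hom[OF cX yc] smap_hom[OF f]] .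
      also have "\<dots> = Comp C (\<delta> m y) (Comp C u h2)"
        using assoc[OF h2 u(1) cone_hom[OF \<delta>c yc]] u(4)[OF yc] by simp
      also have "\<dots> = Comp C (\<delta> m y) (Comp C q h1)" using h by simp
      also have "\<dots> = Comp C (\<beta> m y) h1"
        using assoc[OF h1 q(1) cone_hom[OF \<delta>c yc]] q(3)[OF yc] by simp
      finally show "Comp C (f m) (Comp C (cX m y) h2) = Comp C (\<beta> m y) h1" .
    qed
    obtain z where z: "z \<in> hom C L P'" "\<And>m y. y \<in> Simp (cell T S n x) m \<Longrightarrow> Comp C (\<alpha>' m y) z = Comp C (cX m y) h2"
      "\<And>m y. y \<in> Simp T m \<Longrightarrow> Comp C (\<beta>' m y) z = Comp C (\<beta> m y) h1"
      using relMap_univ[OF P' rz] by blast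
    have wz: "Comp C w z = h1"
    proof (rule relMap_uniq[OF P f comp_hom[OF z(1) w(1)] h1])
      fix m y assume yS: "y \<in> Simp S m"
      have yc: "y \<in> Simp (cell T S n x) m" using subsset_sub[OF G(5) yS] .
      have "Comp C (\<alpha> m y) (Comp C w z) = Comp C (cX m y) h2"
        using assoc[OF z(1) w(1) cone_hom[OF \<alpha>c yS]] w(2)[OF yS] z(2)[OF yc] by simp
      also have "\<dots> = Comp C (\<gamma> m y) (Comp C u h2)"
        using assoc[OF h2 u(1) cone_hom[OF \<gamma>c yS]] u(3)[OF yS] by simp
      also have "\<dots> = Comp C (\<alpha> m y) h1"
        using h assoc[OF h1 q(1) cone_hom[OF \<gamma>c yS]] q(2)[OF yS] by simp
      finally show "Comp C (\<alpha> m y) (Comp C w z) = Comp C (\<alpha> m y) h1" .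
    next
      fix m y assume yT: "y \<in> Simp T m"
      show "Comp C (\<beta> m y) (Comp C w z) = Comp C (\<beta> m y) h1"
        using assoc[OF z(1) w(1) cone_hom[OF \<beta>c yT]] w(3)[OF yT] z(3)[OF yT] by simp
    qed
    have pz: "Comp C p z = h2"
    proof (rule Map_uniq[OF M X comp_hom[OF z(1) p(1)] h2])
      fix m y assume yc: "y \<in> Simp (cell T S n x) m"
      show "Comp C (cX m y) (Comp C p z) = Comp C (cX m y) h2"
        using assoc[OF z(1) p(1) cone_hom[OF cX yc]] p(2)[OF yc] z(2)[OF yc] by simp
    qed
    show "\<exists>!z. z \<in> hom C L P' \<and> Comp C w z = h1 \<and> Comp C p z = h2"
    proof (rule ex1I[of _ z])
      show "z \<in> hom C L P' \<and> Comp C w z = h1 \<and> Comp C p z = h2" using z(1) wz pz by simp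
      fix z' assume zz: "z' \<in> hom C L P' \<and> Comp C w z' = h1 \<and> Comp C p z' = h2"
      have z0: "z' \<in> hom C L P'" using zz by simp
      show "z' = z"
      proof (rule relMap_uniq[OF P' f z0 z(1)])
        fix m y assume yc: "y \<in> Simp (cell T S n x) m"
        have "Comp C (\<alpha>' m y) z' = Comp C (cX m y) (Comp C p z')"
          using assoc[OF z0 p(1) cone_hom[OF cX yc]] p(2)[OF yc] by simp
        then show "Comp C (\<alpha>' m y) z' = Comp C (\<alpha>' m y) z" using zz z(2)[OF yc] by simp
      next
        fix m y assume yT: "y \<in> Simp T m"
        have "Comp C (\<beta>' m y) z' = Comp C (\<beta> m y) (Comp C w z')"
          using assoc[OF z0 w(1) cone_hom[OF \<beta>c yT]] w(3)[OF yT] by simp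
        then show "Comp C (\<beta>' m y) z' = Comp C (\<beta>' m y) z" using zz z(3)[OF yT] by simp
      qed
    qed
  qed
  have wcov: "w \<in> cov" using cov_pb[OF pb u(2)] .
  have "v = Comp C w v'"
  proof (rule relMap_uniq[OF P f v comp_hom[OF v'(1) w(1)]])
    fix m y assume yS: "y \<in> Simp S m"
    have yc: "y \<in> Simp (cell T S n x) m" using subsset_sub[OF G(5) yS] .
    show "Comp C (\<alpha> m y) v = Comp C (\<alpha> m y) (Comp C w v')"
      using assoc[OF v'(1) w(1) cone_hom[OF \<alpha>c yS]] w(2)[OF yS] va[OF yS] va'[OF yc] by simp
  next
    fix m y assume yT: "y \<in> Simp T m"
    show "Comp C (\<beta> m y) v = Comp C (\<beta> m y) (Comp C w v')"
      using assoc[OF v'(1) w(1) cone_hom[OF \<beta>c yT]] w(3)[OF yT] vb[OF yT] vb'[OF yT] by simp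
  qed
  then show ?thesis using cov_comp[OF v'(2) wcov v'(1) w(1)] by simp
qed

end


lemma ND_finite: "finite_sset T \<Longrightarrow> finite (ND T S)"
  unfolding finite_sset_def ND_def by (rule finite_subset[rotated]) auto

lemma ND_card_less:
  assumes T: "finite_sset T" and nx: "(n, x) \<in> ND T S" and sub: "ND T S' \<subseteq> ND T S - {(n, x)}"
  shows "card (ND T S') < card (ND T S)"
proof -
  have "ND T S' \<subset> ND T S" using nx sub by blast
  then show ?thesis using psubset_card_mono[OF ND_finite[OF T]] by blast
qed

context dcat begin

lemma main:
  assumes H: "hypercover C cov X Y f"
    and BX: "\<And>n. \<exists>M c. is_Map C (bdry n) X M c" and BY: "\<And>n. \<exists>M c. is_Map C (bdry n) Y M c"
    and T: "finite_sset T" and K: "is_Map C T X K k"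
  shows "is_subsset S T \<Longrightarrow> is_relMap C S T X Y f P \<alpha> \<beta> \<Longrightarrow> v \<in> hom C K P \<Longrightarrow>
     (\<And>m y. y \<in> Simp S m \<Longrightarrow> Comp C (\<alpha> m y) v = k m y) \<Longrightarrow>
     (\<And>m y. y \<in> Simp T m \<Longrightarrow> Comp C (\<beta> m y) v = Comp C (f m) (k m y)) \<Longrightarrow>
     (\<exists>M c. is_Map C S X M c) \<Longrightarrow> (\<exists>M c. is_Map C S Y M c) \<Longrightarrow> (\<exists>M c. is_Map C T Y M c) \<Longrightarrow> v \<in> cov"
proof (induction "card (ND T S)" arbitrary: S P \<alpha> \<beta> v rule: less_induct)
  case less
  have f: "is_smap C X Y f" using H unfolding hypercover_def by simp
  have X: "is_sobj C X" and Y: "is_sobj C Y" using smap_sobj[OF f] by auto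
  note ST = less.prems(1)
  show ?case
  proof (cases "ND T S = {}")
    case True
    have full: "\<And>n. Simp T n \<subseteq> Simp S n" using ND_empty[OF ST True] by blast
    show ?thesis using full_cover[OF f ST full K less.prems(2,3,4,5)] by blast
  next
    case False
    obtain n x where nx: "(n, x) \<in> ND T S" and gc: "good_cell T S n x"
      and sub: "ND T (cell T S n x) \<subseteq> ND T S - {(n, x)}"
      using min_cell[OF ST False] by blast
    note G = gc_facts[OF gc]
    have lt: "card (ND T (cell T S n x)) < card (ND T S)" using ND_card_less[OF T nx sub] .
    obtain MSX cSX where MSX: "is_Map C S X MSX cSX" using less.prems(6) by blast
    obtain MSY cSY where MSY: "is_Map C S Y MSY cSY" using less.prems(7) by blast
    obtain MTY cTY where MTY: "is_Map C T Y MTY cTY" using less.prems(8) by blast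
    obtain MBX cBX where MBX: "is_Map C (bdry n) X MBX cBX" using BX by blast
    obtain MBY cBY where MBY: "is_Map C (bdry n) Y MBY cBY" using BY by blast
    obtain M cX where M: "is_Map C (cell T S n x) X M cX" using Map_cell[OF gc X MSX MBX] by blast
    obtain MY cY where MY: "is_Map C (cell T S n x) Y MY cY" using Map_cell[OF gc Y MSY MBY] by blast
    obtain P' \<alpha>' \<beta>' where P': "is_relMap C (cell T S n x) T X Y f P' \<alpha>' \<beta>'"
      using relMap_exists[OF f G(4) M MY MTY] by blast
    have kc: "is_cone C T X K k" using Map_cone[OF K] .
    have rc: "is_relcone C (cell T S n x) T X Y f K k (\<lambda>m y. Comp C (f m) (k m y))"
      unfolding is_relcone_def using cone_restrict[OF G(4) kc] cone_post[OF f kc] by simp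
    obtain v' where v': "v' \<in> hom C K P'" "\<And>m y. y \<in> Simp (cell T S n x) m \<Longrightarrow> Comp C (\<alpha>' m y) v' = k m y"
      "\<And>m y. y \<in> Simp T m \<Longrightarrow> Comp C (\<beta>' m y) v' = Comp C (f m) (k m y)"
      using relMap_univ[OF P' rc] by blast
    have v'c: "v' \<in> cov"
      using less.hyps[OF lt G(4) P' v'(1) v'(2) v'(3)] M MY MTY by blast
    obtain Q \<gamma> \<delta> where Q: "is_relMap C S (cell T S n x) X Y f Q \<gamma> \<delta>"
      using relMap_exists[OF f G(5) MSX MSY MY] by blast
    obtain Pn \<alpha>n \<beta>n vn where Pn: "is_relMap C (bdry n) (simplex n) X Y f Pn \<alpha>n \<beta>n"
      and vn: "vn \<in> hom C (SOb X n) Pn" "vn \<in> cov"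
      and va: "\<forall>m. \<forall>\<theta>\<in>Simp (bdry n) m. Comp C (\<alpha>n m \<theta>) vn = SMor X m n \<theta>"
      and vb: "\<forall>m. \<forall>\<theta>\<in>Simp (simplex n) m. Comp C (\<beta>n m \<theta>) vn = Comp C (f m) (SMor X m n \<theta>)"
      using hyper_vn[OF H MBX MBY] by blast
    obtain u where u: "u \<in> hom C M Q" "\<forall>m. \<forall>y\<in>Simp S m. Comp C (\<gamma> m y) u = cX m y"
      "\<forall>m. \<forall>y\<in>Simp (cell T S n x) m. Comp C (\<delta> m y) u = Comp C (f m) (cX m y)" "u \<in> cov"
      using cell_cover[OF f gc M Q Pn vn] va vb by blast
    show ?thesis
      using step_cover[OF f gc ST K M less.prems(2) less.prems(3) less.prems(4) less.prems(5) P' v'(1) v'c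
          v'(2) v'(3) Q u(1) u(4)] u(2) u(3) by blast
  qed
qed

lemma exist:
  assumes Z: "is_sobj C Z" and T: "finite_sset T"
  shows "is_subsset S T \<Longrightarrow> is_Map C S Z MS cS \<Longrightarrow>
    (\<And>k y. (k, y) \<in> ND T S \<Longrightarrow> \<exists>M c. is_Map C (bdry k) Z M c) \<Longrightarrow> \<exists>M c. is_Map C T Z M c"
proof (induction "card (ND T S)" arbitrary: S MS cS rule: less_induct)
  case less
  note ST = less.prems(1)
  show ?case
  proof (cases "ND T S = {}")
    case True
    have full: "\<And>n. Simp T n \<subseteq> Simp S n" using ND_empty[OF ST True] by blast
    show ?thesis using Map_full[OF ST full less.prems(2)] by blast
  next
    case False
    obtain n x where nx: "(n, x) \<in> ND T S" and gc: "good_cell T S n x"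
      and sub: "ND T (cell T S n x) \<subseteq> ND T S - {(n, x)}"
      using min_cell[OF ST False] by blast
    note G = gc_facts[OF gc]
    have lt: "card (ND T (cell T S n x)) < card (ND T S)" using ND_card_less[OF T nx sub] .
    obtain MB cB where MB: "is_Map C (bdry n) Z MB cB" using less.prems(3)[OF nx] by blast
    obtain M c where M: "is_Map C (cell T S n x) Z M c" using Map_cell[OF gc Z less.prems(2) MB] by blast
    show ?thesis using less.hyps[OF lt G(4) M] less.prems(3) sub by blast
  qed
qed

end

lemma noninj_adj:
  assumes t: "\<theta> \<in> dmor k n" and ab: "a < b" "b \<le> k" "\<theta> a = \<theta> b"
  shows "\<theta> a = \<theta> (Suc a)" "Suc a \<le> k"
  using dmorD(2)[OF t, of a "Suc a"] dmorD(2)[OF t, of "Suc a" b] ab by auto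

lemma bdry_nd_inj:
  assumes t: "\<theta> \<in> Simp (bdry n) k" and nd: "\<not> degenerate (bdry n) k \<theta>"
  shows "inj_on \<theta> {..k}"
proof (rule ccontr)
  assume "\<not> inj_on \<theta> {..k}"
  then obtain a b where "a \<le> k" "b \<le> k" "a \<noteq> b" "\<theta> a = \<theta> b" unfolding inj_on_def by auto
  then obtain i j where ij: "i < j" "j \<le> k" "\<theta> i = \<theta> j"
    by (metis linorder_neqE_nat)
  have tm: "\<theta> \<in> dmor k n" and ns: "\<not> surjd k n \<theta>" using t bdry_simp by auto
  have ei: "\<theta> i = \<theta> (Suc i)" and ik: "Suc i \<le> k" using noninj_adj[OF tm ij] by auto
  define k' where "k' = k - 1"
  have kk: "k = Suc k'" using ik unfolding k'_def by simp
  define s where "s = (\<lambda>j. if j \<le> k then (if j \<le> i then j else j - 1) else 0)"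
  define \<theta>' where "\<theta>' = (\<lambda>j. if j \<le> k' then (if j \<le> i then \<theta> j else \<theta> (Suc j)) else 0)"
  have s: "s \<in> dmor k k'" by (rule dmorI) (use ik in \<open>auto simp: s_def kk\<close>)
  have t': "\<theta>' \<in> dmor k' n"
  proof (rule dmorI)
    fix j assume "j \<le> k'" then show "\<theta>' j \<le> n" using dmorD(1)[OF tm] by (auto simp: \<theta>'_def kk)
  next
    fix a b assume ab: "a \<le> b" "b \<le> k'"
    show "\<theta>' a \<le> \<theta>' b"
      using ab dmorD(2)[OF tm, of a b] dmorD(2)[OF tm, of a "Suc b"] dmorD(2)[OF tm, of "Suc a" "Suc b"]
      by (auto simp: \<theta>'_def kk)
  qed (simp add: \<theta>'_def)
  have eq: "dcomp k \<theta>' s = \<theta>"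
  proof
    fix j show "dcomp k \<theta>' s j = \<theta> j"
    proof (cases "j \<le> k")
      case True
      show ?thesis
      proof (cases "j \<le> i")
        case True then show ?thesis using \<open>j \<le> k\<close> ik by (simp add: dcomp_def s_def \<theta>'_def kk)
      next
        case False
        then have "j - 1 \<le> k'" using \<open>j \<le> k\<close> kk by simp
        moreover have "j = Suc i \<or> i < j - 1" using False by auto
        ultimately show ?thesis using False \<open>j \<le> k\<close> ei
          by (auto simp: dcomp_def s_def \<theta>'_def)
      qed
    next
      case False then show ?thesis using dmorD(3)[OF tm] by (simp add: dcomp_def)
    qed
  qed
  have ss: "surjd k k' s"
    unfolding surjd_def
  proof
    fix j assume "j \<in> {..k'}"
    then have j: "j \<le> k'" by simp
    show "j \<in> s ` {..k}"
    proof (cases "j \<le> i")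
      case True then show ?thesis using j kk by (force simp: s_def)
    next
      case False then show ?thesis using j kk by (intro image_eqI[of _ _ "Suc j"]) (auto simp: s_def)
    qed
  qed
  have ns': "\<not> surjd k' n \<theta>'"
  proof
    assume "surjd k' n \<theta>'"
    then have "surjd k n (dcomp k \<theta>' s)" using surjd_dcomp[OF s ss] by simp
    then show False using ns eq by simp
  qed
  have "degenerate (bdry n) k \<theta>"
    unfolding degenerate_def
    by (rule exI[of _ k'], intro conjI bexI[of _ s] bexI[of _ \<theta>'])
       (use kk s t' ns' eq in \<open>auto simp: bdry_simp\<close>)
  then show False using nd by simp
qed

lemma bdry_nd_lt:
  assumes t: "\<theta> \<in> Simp (bdry n) k" and nd: "\<not> degenerate (bdry n) k \<theta>"
  shows "k < n"
proof -
  have tm: "\<theta> \<in> dmor k n" and ns: "\<not> surjd k n \<theta>" using t bdry_simp by auto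
  have inj: "inj_on \<theta> {..k}" using bdry_nd_inj[OF t nd] .
  have sub: "\<theta> ` {..k} \<subset> {..n}" using ns dmorD(1)[OF tm] unfolding surjd_def by auto
  have "card (\<theta> ` {..k}) < card {..n}" using psubset_card_mono[OF _ sub] by simp
  then show ?thesis using card_image[OF inj] by simp
qed

lemma bdry_finite: "finite_sset (bdry n)"
  unfolding finite_sset_def
proof (intro conjI bdry_sset)
  let ?F = "{\<theta>. \<forall>i. (i \<in> {..n} \<longrightarrow> \<theta> i \<in> {..n}) \<and> (i \<notin> {..n} \<longrightarrow> \<theta> i = 0)}"
  have fF: "finite ?F" by (rule finite_set_of_finite_funs) auto
  have "{(k, \<theta>). \<theta> \<in> Simp (bdry n) k \<and> \<not> degenerate (bdry n) k \<theta>} \<subseteq> {..<n} \<times> ?F"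
  proof
    fix p assume "p \<in> {(k, \<theta>). \<theta> \<in> Simp (bdry n) k \<and> \<not> degenerate (bdry n) k \<theta>}"
    then obtain k \<theta> where p: "p = (k, \<theta>)" and t: "\<theta> \<in> Simp (bdry n) k" and nd: "\<not> degenerate (bdry n) k \<theta>"
      by blast
    have kn: "k < n" using bdry_nd_lt[OF t nd] .
    have tm: "\<theta> \<in> dmor k n" using t bdry_simp by auto
    have "\<theta> \<in> ?F"
    proof (intro CollectI allI conjI impI)
      fix i assume "i \<in> {..n}" then show "\<theta> i \<in> {..n}"
        using dmorD(1)[OF tm, of i] dmorD(3)[OF tm, of i] by (cases "i \<le> k") auto
    next
      fix i assume "i \<notin> {..n}" then show "\<theta> i = 0" using dmorD(3)[OF tm, of i] kn by simp
    qed
    then show "p \<in> {..<n} \<times> ?F" using kn p by simp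
  qed
  moreover have "finite ({..<n} \<times> ?F)" using fF by simp
  ultimately show "finite {(k, \<theta>). \<theta> \<in> Simp (bdry n) k \<and> \<not> degenerate (bdry n) k \<theta>}"
    by (rule finite_subset)
qed

context dcat begin

lemma bdry_exists:
  assumes Z: "is_sobj C Z"
  shows "\<exists>M c. is_Map C (bdry n) Z M c"
proof (induction n rule: less_induct)
  case (less n)
  define E :: "(nat \<Rightarrow> nat) sset" where "E = \<lparr>Simp = (\<lambda>_. {}), Act = Act (bdry n)\<rparr>"
  have Es: "is_sset E" unfolding is_sset_def E_def by simp
  have E: "is_subsset E (bdry n)"
    unfolding is_subsset_def using Es bdry_sset by (simp add: E_def)
  obtain t where t: "is_terminal C t" using has_term by blast
  have ME: "is_Map C E Z t (\<lambda>_ _. undefined)" by (rule Map_empty[OF t]) (simp add: E_def)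
  show ?case
  proof (rule exist[OF Z bdry_finite E ME])
    fix k y assume "(k, y) \<in> ND (bdry n) E"
    then have "k < n" using bdry_nd_lt unfolding ND_def by blast
    then show "\<exists>M c. is_Map C (bdry k) Z M c" using less by blast
  qed
qed

end

theorem lemma3p3:
  fixes C :: "('o,'m) cat" and cov :: "'m set"
    and T S :: "'a sset" and X Y :: "('o,'m) sobj" and f :: "nat \<Rightarrow> 'm"
    and K :: 'o and k :: "nat \<Rightarrow> 'a \<Rightarrow> 'm" and P :: 'o and v :: 'm
  assumes "descent_category C cov"
    and "finite_sset T"
    and "is_subsset S T"
    and "hypercover C cov X Y f"
    and "is_Map C T X K k"
    and "is_relmatch C S T X Y f K k P v"
  shows "v \<in> cov"
proof -
  interpret dcat C cov by (unfold_locales) (rule assms(1))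
  have f: "is_smap C X Y f" using assms(4) unfolding hypercover_def by simp
  have X: "is_sobj C X" and Y: "is_sobj C Y" using smap_sobj[OF f] by auto
  obtain \<alpha> \<beta> where R: "is_relMap C S T X Y f P \<alpha> \<beta>" "v \<in> hom C K P"
    "\<forall>n. \<forall>x\<in>Simp S n. Comp C (\<alpha> n x) v = k n x"
    "\<forall>n. \<forall>x\<in>Simp T n. Comp C (\<beta> n x) v = Comp C (f n) (k n x)"
    "\<exists>M c. is_Map C S X M c" "\<exists>M c. is_Map C S Y M c" "\<exists>M c. is_Map C T Y M c"
    using relmatch_relMap[OF f assms(3) assms(6)] by blast
  show ?thesis
    using main[OF assms(4) bdry_exists[OF X] bdry_exists[OF Y] assms(2) assms(5) assms(3) R(1) R(2) _ _ R(5) R(6) R(7)]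
      R(3) R(4) by blast
qed


end
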